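(* Let $0<K_2<K_1<1/27$ and write $\tau_i=\tau_{K_i}$, $i=1,2$. (a) For any $t_0\in\mathbb{R}$ and $n\in\mathbb{Z}$ the curves $t\mapsto y_{K_1}(t+t_0)$ and $t\mapsto y_{K_2}(t)$ intersect exactly once in the interval $(n\tau_2/2,(n+1)\tau_2/2)$. (b) (i) If $0\le t\le\tau_2/6$ then $y_{K_2}(2\tau_2/3-t)>y_{K_1}(2\tau_1/3-t)$; and (ii) if in addition $\tau_2\le3\tau_1$ then $y_{K_2}(\tau_2-t)<y_{K_1}(\tau_1-t)$.
   Context: For $0<K<1/27$ let $U_K(y)=\tfrac12Ky-\tfrac18y^2(1-y)^2$; it has zeros $0<a(K)<b(K)<1<c(K)$ with $U_K<0$ on $(a(K),b(K))$. Let $\tau_K=2\int_{a(K)}^{b(K)}dy/\sqrt{-2U_K(y)}$. Define $y_K:\mathbb{R}\to[a(K),b(K)]$ as follows: for $0\le t\le\tau_K/2$, $y_K(t)$ is the inverse of the increasing function $y\mapsto\int_{a(K)}^{y}dw/\sqrt{-2U_K(w)}$, $y\in[a(K),b(K)]$; then $y_K$ is extended to $\mathbb{R}$ as an even function of period $\tau_K$. Equivalently, $y_K$ is the solution of $\tfrac12y'(t)^2+U_K(y(t))=0$ with $y_K(0)=a(K)$ oscillating between $a(K)$ and $b(K)$. *)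

theory Defs
  imports "HOL-Analysis.Analysis"
begin

definition U :: "real \<Rightarrow> real \<Rightarrow> real" where
  "U K y = K * y / 2 - y\<^sup>2 * (1 - y)\<^sup>2 / 8"

definition zeros_abc :: "real \<Rightarrow> real \<times> real \<times> real" where
  "zeros_abc K = (THE (a, b, c). 0 < a \<and> a < b \<and> b < 1 \<and> 1 < c \<and>
      U K a = 0 \<and> U K b = 0 \<and> U K c = 0 \<and> (\<forall>y. a < y \<and> y < b \<longrightarrow> U K y < 0))"

definition aK :: "real \<Rightarrow> real" where "aK K = fst (zeros_abc K)"
definition bK :: "real \<Rightarrow> real" where "bK K = fst (snd (zeros_abc K))"
definition cK :: "real \<Rightarrow> real" where "cK K = snd (snd (zeros_abc K))"

text \<open>F_K(y) = int_{a(K)}^{y} dw / sqrt(-2 U_K(w))  (Henstock-Kurzweil integral; the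
  integrand is integrable with integrable endpoint singularities).\<close>
definition FK :: "real \<Rightarrow> real \<Rightarrow> real" where
  "FK K y = integral {aK K..y} (\<lambda>w. 1 / sqrt (- 2 * U K w))"

definition tauK :: "real \<Rightarrow> real" where
  "tauK K = 2 * integral {aK K..bK K} (\<lambda>y. 1 / sqrt (- 2 * U K y))"

definition yhalf :: "real \<Rightarrow> real \<Rightarrow> real" where
  "yhalf K t = (THE y. aK K \<le> y \<and> y \<le> bK K \<and> FK K y = t)"

text \<open>Even, tau_K-periodic extension: y_K(t) = yhalf(|t - tau_K * round(t / tau_K)|),
  where the argument lies in [0, tau_K/2].\<close>
definition yK :: "real \<Rightarrow> real \<Rightarrow> real" where
  "yK K t = yhalf K \<bar>t - tauK K * of_int (round (t / tauK K))\<bar>"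

end

theory Submission
  imports Defs
begin



lemma U_fact: "U K y = - (y/8) * (y*(1-y)^2 - 4*K)"
  unfolding U_def by (simp add: power2_eq_square field_simps)

lemma cubic_factor:
  fixes a b c K :: real
  assumes "a \<noteq> b" "a \<noteq> c" "b \<noteq> c"
    and ha: "a*(1-a)^2 = 4*K" and hb: "b*(1-b)^2 = 4*K" and hc: "c*(1-c)^2 = 4*K"
  shows "y*(1-y)^2 - 4*K = (y-a)*(y-b)*(y-c)"
proof -
  have e1: "a^2+a*b+b^2 - 2*(a+b) + 1 = 0"
  proof -
    have "(a-b)*(a^2+a*b+b^2 - 2*(a+b) + 1) = 0" using ha hb by (simp add: power2_eq_square algebra_simps)
    thus ?thesis using assms(1) by simp
  qed
  have e2: "a^2+a*c+c^2 - 2*(a+c) + 1 = 0"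
  proof -
    have "(a-c)*(a^2+a*c+c^2 - 2*(a+c) + 1) = 0" using ha hc by (simp add: power2_eq_square algebra_simps)
    thus ?thesis using assms(2) by simp
  qed
  have s: "a+b+c = 2"
  proof -
    have "(b-c)*(a+b+c-2) = 0" using e1 e2 by (simp add: power2_eq_square algebra_simps)
    thus ?thesis using assms(3) by simp
  qed
  have c: "c = 2 - a - b" using s by simp
  show ?thesis using ha e1 unfolding c by algebra
qed


lemma p_cont: "continuous_on S (\<lambda>y::real. y*(1-y)^2 - 4*K)"
  by (intro continuous_intros)

lemma roots_exist:
  fixes K :: real
  assumes K: "0 < K" "K < 1/27"
  obtains a b c where "0<a" "a<1/3" "1/3<b" "b<1" "1<c" "c<4/3"
    "a*(1-a)^2 = 4*K" "b*(1-b)^2 = 4*K" "c*(1-c)^2 = 4*K"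
proof -
  let ?p = "\<lambda>y::real. y*(1-y)^2 - 4*K"
  obtain a where a: "0 \<le> a" "a \<le> 1/3" "?p a = 0"
    using IVT'[of ?p 0 0 "1/3"] K p_cont by (auto simp: power2_eq_square)
  obtain b where b: "1/3 \<le> b" "b \<le> 1" "?p b = 0"
    using IVT2'[of ?p 1 0 "1/3"] K p_cont by (auto simp: power2_eq_square)
  obtain c where c: "1 \<le> c" "c \<le> 4/3" "?p c = 0"
    using IVT'[of ?p 1 0 "4/3"] K p_cont by (auto simp: power2_eq_square)
  have "a \<noteq> 0" using a K by (auto simp: power2_eq_square)
  moreover have "a \<noteq> 1/3" proof assume "a = 1/3" with a K show False by (simp add: power2_eq_square) qed
  moreover have "b \<noteq> 1" using b K by (auto simp: power2_eq_square)
  moreover have "b \<noteq> 1/3" proof assume "b = 1/3" with b K show False by (simp add: power2_eq_square) qed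
  moreover have "c \<noteq> 1" using c K by (auto simp: power2_eq_square)
  moreover have "c \<noteq> 4/3" proof assume "c = 4/3" with c K show False by (simp add: power2_eq_square) qed
  ultimately show ?thesis using a b c that[of a b c] by auto
qed

definition ABC :: "real \<Rightarrow> real \<Rightarrow> real \<Rightarrow> real \<Rightarrow> bool" where "ABC K a b c \<longleftrightarrow> 0<a \<and> a<1/3 \<and> 1/3<b \<and> b<1 \<and> 1<c \<and> c<4/3 \<and>
    a*(1-a)^2 = 4*K \<and> b*(1-b)^2 = 4*K \<and> c*(1-c)^2 = 4*K"

lemma ABC_factor: "ABC K a b c \<Longrightarrow> y*(1-y)^2 - 4*K = (y-a)*(y-b)*(y-c)"
  unfolding ABC_def by (intro cubic_factor) auto

lemma zeros_abc_eq:
  assumes K: "0 < K" "K < 1/27" and abc: "ABC K a b c"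
  shows "zeros_abc K = (a,b,c)"
proof -
  have f: "\<And>y. y*(1-y)^2 - 4*K = (y-a)*(y-b)*(y-c)" using ABC_factor[OF abc] .
  have U: "\<And>y. U K y = - (y/8) * ((y-a)*(y-b)*(y-c))" using f U_fact by simp
  have ord: "0<a" "a<b" "b<c" "b<1" "1<c" using abc unfolding ABC_def by auto
  have P: "0 < a \<and> a < b \<and> b < 1 \<and> 1 < c \<and>
      U K a = 0 \<and> U K b = 0 \<and> U K c = 0 \<and> (\<forall>y. a < y \<and> y < b \<longrightarrow> U K y < 0)"
  proof -
    have "U K y < 0" if "a<y" "y<b" for y
    proof -
      have "(y-a)*(y-b)*(y-c) = (y-a)*((b-y)*(c-y))" by (simp add: algebra_simps)
      moreover have "(y-a)*((b-y)*(c-y)) > 0" using that ord by (intro mult_pos_pos) auto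
      ultimately have "y * ((y-a)*(y-b)*(y-c)) > 0" using that ord by (metis mult_pos_pos order.strict_trans)
      thus ?thesis using U[of y] by simp
    qed
    thus ?thesis using ord U by auto
  qed
  show ?thesis unfolding zeros_abc_def
  proof (rule the_equality)
    show "case (a, b, c) of (a, b, c) \<Rightarrow> 0 < a \<and> a < b \<and> b < 1 \<and> 1 < c \<and>
      U K a = 0 \<and> U K b = 0 \<and> U K c = 0 \<and> (\<forall>y. a < y \<and> y < b \<longrightarrow> U K y < 0)" using P by simp
  next
    fix t assume "case t of (a, b, c) \<Rightarrow> 0 < a \<and> a < b \<and> b < 1 \<and> 1 < c \<and>
      U K a = 0 \<and> U K b = 0 \<and> U K c = 0 \<and> (\<forall>y. a < y \<and> y < b \<longrightarrow> U K y < 0)"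
    then obtain a' b' c' where t: "t = (a',b',c')" and h: "0 < a'" "a' < b'" "b' < 1" "1 < c'"
      "U K a' = 0" "U K b' = 0" "U K c' = 0" by (cases t) auto
    have r: "y \<in> {a,b,c}" if "0 < y" "U K y = 0" for y
    proof -
      have "(y-a)*(y-b)*(y-c) = 0" using U[of y] that by simp
      thus ?thesis by auto
    qed
    have "a' \<in> {a,b,c}" "b' \<in> {a,b,c}" "c' \<in> {a,b,c}" using r h by auto
    hence "a' = a" "b' = b" "c' = c" using h ord by auto
    thus "t = (a,b,c)" using t by simp
  qed
qed

lemma abcK:
  assumes K: "0 < K" "K < 1/27"
  shows "ABC K (aK K) (bK K) (cK K)"
proof -
  obtain a b c where "ABC K a b c" using roots_exist[OF K] unfolding ABC_def by metis
  with zeros_abc_eq[OF K this] show ?thesis unfolding aK_def bK_def cK_def by simp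
qed




definition Gf :: "real \<Rightarrow> real \<Rightarrow> real \<Rightarrow> real" where
  "Gf X Y p = 1 / sqrt (X * (cos p)^2 + Y * (sin p)^2)"

definition Hf :: "real \<Rightarrow> real \<Rightarrow> real \<Rightarrow> real" where
  "Hf X Y p = integral {0..p} (Gf X Y)"

lemma Gf_den_pos: fixes X Y p :: real shows "0 < X \<Longrightarrow> 0 < Y \<Longrightarrow> 0 < X * (cos p)^2 + Y * (sin p)^2"
proof -
  assume "0 < X" "0 < Y"
  have "min X Y * ((cos p)^2 + (sin p)^2) \<le> X * (cos p)^2 + Y * (sin p)^2"
    by (simp only: distrib_left) (meson add_mono min.cobounded1 min.cobounded2 mult_right_mono zero_le_power2)
  moreover have "min X Y > 0" using \<open>0<X\<close> \<open>0<Y\<close> by simp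
  moreover have "(cos p)^2 + (sin p)^2 = 1" by simp
  ultimately have "min X Y \<le> X * (cos p)^2 + Y * (sin p)^2" by simp
  with \<open>min X Y > 0\<close> show ?thesis by linarith
qed

lemma Gf_cont: assumes "0 < X" "0 < Y" shows "continuous_on S (Gf X Y)"
proof -
  have "\<forall>p\<in>S. sqrt (X * (cos p)^2 + Y * (sin p)^2) \<noteq> 0" using Gf_den_pos[OF assms] by (metis less_irrefl real_sqrt_eq_zero_cancel_iff)
  thus ?thesis unfolding Gf_def by (intro continuous_intros) auto
qed

lemma Gf_pos: "0 < X \<Longrightarrow> 0 < Y \<Longrightarrow> Gf X Y p > 0"
  unfolding Gf_def using Gf_den_pos by simp

lemma Hf_deriv:
  assumes "0 < X" "0 < Y" "0 < p" "p < 2"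
  shows "(Hf X Y has_real_derivative Gf X Y p) (at p)"
proof -
  have "(Hf X Y has_real_derivative Gf X Y p) (at p within {0..2})"
    unfolding Hf_def using assms by (intro integral_has_real_derivative Gf_cont) auto
  thus ?thesis using assms by (simp add: at_within_Icc_at)
qed

lemma Hf_cont: "0 < X \<Longrightarrow> 0 < Y \<Longrightarrow> continuous_on {0..2} (Hf X Y)"
  unfolding Hf_def by (intro indefinite_integral_continuous_1 integrable_continuous_real Gf_cont)

lemma Hf_0[simp]: "Hf X Y 0 = 0" unfolding Hf_def by simp




locale Kctx = fixes K :: real assumes K: "0 < K" "K < 1/27"
begin

abbreviation "a \<equiv> aK K"
abbreviation "b \<equiv> bK K"
abbreviation "c \<equiv> cK K"
definition "X = b*(c-a)"
definition "Y = a*(c-b)"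
definition "tt y = b*(y-a)/((b-a)*y)"
definition "Phi y = arcsin (sqrt (tt y))"
definition "g y = 1 / sqrt (- 2 * U K y)"

lemma abc: "ABC K a b c" using abcK[OF K] .
lemma ab: "0 < a" "a < 1/3" "1/3 < b" "b < 1" "1 < c" "c < 4/3" "a < b" "b < c"
  using abc unfolding ABC_def by auto
lemma roots: "a*(1-a)^2 = 4*K" "b*(1-b)^2 = 4*K" "c*(1-c)^2 = 4*K"
  using abc unfolding ABC_def by auto
lemma pfact: "y*(1-y)^2 - 4*K = (y-a)*(y-b)*(y-c)" using ABC_factor[OF abc] .
lemma mU: "- 2 * U K y = y*(y-a)*(b-y)*(c-y)/4"
proof -
  have "- 2 * U K y = y/4 * (y*(1-y)^2 - 4*K)" using U_fact[of K y] by simp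
  also have "\<dots> = y/4*((y-a)*(y-b)*(y-c))" by (simp add: pfact)
  finally show ?thesis by (simp add: algebra_simps)
qed
lemma mU_pos: "a < y \<Longrightarrow> y < b \<Longrightarrow> - 2 * U K y > 0"
  unfolding mU using ab by (intro divide_pos_pos mult_pos_pos) auto
lemma XY_pos: "X > 0" "Y > 0" unfolding X_def Y_def using ab by auto

lemma tt_range: "a < y \<Longrightarrow> y < b \<Longrightarrow> 0 < tt y \<and> tt y < 1"
  unfolding tt_def using ab by (auto simp: field_simps)
lemma one_tt: "0 < y \<Longrightarrow> 1 - tt y = a*(b-y)/((b-a)*y)"
  unfolding tt_def using ab by (simp add: field_simps)
lemma XYt: "0 < y \<Longrightarrow> X*(1 - tt y) + Y*tt y = a*b*(c-y)/y"
proof -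
  assume y: "0 < y"
  have ba: "b - a \<noteq> 0" using ab by simp
  have "X*(1 - tt y) + Y*tt y = X - c*(b-a)*tt y" unfolding X_def Y_def by (simp add: algebra_simps)
  also have "c*(b-a)*tt y = c*b*(y-a)/y" unfolding tt_def using ba y by (simp add: field_simps)
  finally show ?thesis unfolding X_def using y by (simp add: field_simps)
qed

definition "dPhi y = (a*b/((b-a)*y^2)) * (inverse (sqrt (tt y)) / 2) * inverse (sqrt (1 - tt y))"

lemma tt_deriv: "0 < y \<Longrightarrow> (tt has_real_derivative a*b/((b-a)*y^2)) (at y)"
proof -
  assume y: "0 < y"
  have ba: "b - a \<noteq> 0" using ab by simp
  have "((\<lambda>y. b*(y-a)/((b-a)*y)) has_real_derivative
        (b*1*((b-a)*y) - b*(y-a)*((b-a)*1))/(((b-a)*y)*((b-a)*y))) (at y)"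
    using y ba by (intro derivative_eq_intros) auto
  moreover have "(b*1*((b-a)*y) - b*(y-a)*((b-a)*1))/(((b-a)*y)*((b-a)*y)) = a*b/((b-a)*y^2)"
  proof -
    have "b*1*((b-a)*y) - b*(y-a)*((b-a)*1) = (a*b)*(b-a)" by algebra
    moreover have "((b-a)*y)*((b-a)*y) = (b-a)*((b-a)*y^2)" by (simp add: power2_eq_square)
    ultimately show ?thesis using ba y by simp
  qed
  ultimately show ?thesis unfolding tt_def[abs_def] by simp
qed

lemma Phi_deriv:
  assumes y: "a < y" "y < b"
  shows "(Phi has_real_derivative dPhi y) (at y)"
proof -
  have t: "0 < tt y" "tt y < 1" using tt_range[OF y] by auto
  have d1: "(tt has_real_derivative a*b/((b-a)*y^2)) (at y)" using tt_deriv y ab by simp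
  have d2: "((\<lambda>y. sqrt (tt y)) has_real_derivative inverse (sqrt (tt y))/2 * (a*b/((b-a)*y^2))) (at y)"
    using DERIV_chain2[OF DERIV_real_sqrt[OF t(1)] d1] .
  have "0 \<le> sqrt (tt y)" using t by simp
  hence s1: "- 1 < sqrt (tt y)" by linarith
  have s: "- 1 < sqrt (tt y)" "sqrt (tt y) < 1" using s1 t by auto
  have d3: "((\<lambda>y. arcsin (sqrt (tt y))) has_real_derivative
       inverse (sqrt (1 - (sqrt (tt y))\<^sup>2)) * (inverse (sqrt (tt y))/2 * (a*b/((b-a)*y^2)))) (at y)"
    using DERIV_chain2[OF DERIV_arcsin[OF s] d2] .
  moreover have "(sqrt (tt y))\<^sup>2 = tt y" using t by simp
  ultimately show ?thesis unfolding Phi_def[abs_def] dPhi_def by (simp add: mult_ac)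
qed

lemma sin_Phi: "a \<le> y \<Longrightarrow> y \<le> b \<Longrightarrow> sin (Phi y) = sqrt (tt y)"
proof -
  assume y: "a \<le> y" "y \<le> b"
  have "0 \<le> tt y" "tt y \<le> 1" unfolding tt_def using y ab by (auto simp: field_simps)
  moreover have "-1 \<le> sqrt (tt y)" using \<open>0 \<le> tt y\<close> by (smt (verit) real_sqrt_ge_zero)
  ultimately show ?thesis unfolding Phi_def by (intro sin_arcsin) auto
qed

lemma Phi_range: "a \<le> y \<Longrightarrow> y \<le> b \<Longrightarrow> 0 \<le> Phi y \<and> Phi y \<le> pi/2"
proof -
  assume y: "a \<le> y" "y \<le> b"
  have "0 \<le> tt y" "tt y \<le> 1" unfolding tt_def using y ab by (auto simp: field_simps)
  moreover have "-1 \<le> sqrt (tt y)" using \<open>0 \<le> tt y\<close> by (smt (verit) real_sqrt_ge_zero)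
  ultimately show ?thesis unfolding Phi_def using arcsin_ubound[of "sqrt (tt y)"] arcsin_nonneg[of "sqrt (tt y)"] by auto
qed

lemma Phi_a: "Phi a = 0" unfolding Phi_def tt_def by simp
lemma Phi_b: "Phi b = pi/2" unfolding Phi_def tt_def using ab by simp

lemma Phi_cont: "continuous_on {a..b} Phi"
proof -
  have "\<forall>y\<in>{a..b}. 0 \<le> tt y \<and> tt y \<le> 1" unfolding tt_def using ab by (auto simp: field_simps)
  hence "\<forall>y\<in>{a..b}. -1 \<le> sqrt (tt y) \<and> sqrt (tt y) \<le> 1"
    by (smt (verit) real_sqrt_ge_zero real_sqrt_le_1_iff)
  moreover have "\<forall>y\<in>{a..b}. (b-a)*y \<noteq> 0" using ab by auto
  ultimately show ?thesis unfolding Phi_def[abs_def]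
    by (intro continuous_intros) (auto simp: tt_def[abs_def] intro!: continuous_intros)
qed

lemma sq_help:
  fixes A T k :: real
  assumes "0 < A" "0 < T" "T < 1"
  shows "(4 * (1/sqrt A) * (k * (inverse (sqrt T)/2) * inverse (sqrt (1-T))))^2 = 16 * (1/A) * (k^2 / (4*T*(1-T)))"
proof -
  have "(4 * (1/sqrt A) * (k * (inverse (sqrt T)/2) * inverse (sqrt (1-T))))^2
     = 16 * (1/(sqrt A)^2) * (k^2 * (inverse ((sqrt T)^2)/4) * inverse ((sqrt (1-T))^2))"
    by (simp add: power_mult_distrib power_divide power_inverse)
  also have "\<dots> = 16 * (1/A) * (k^2 / (4*T*(1-T)))" using assms by (simp add: field_simps)
  finally show ?thesis .
qed

lemma rat_help:
  fixes a b y p q r e :: real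
  assumes "a \<noteq> 0" "b \<noteq> 0" "y \<noteq> 0" "p \<noteq> 0" "q \<noteq> 0" "r \<noteq> 0" "e \<noteq> 0"
  shows "16 * (1/(a*b*r/y)) * ((a*b/(e*y^2))^2 / (4*a*b*p*q/(e*y)^2)) = 4/(y*p*q*r)"
  using assms by (simp add: field_simps power2_eq_square)

lemma key_identity:
  assumes y: "a < y" "y < b"
  shows "4 * Gf X Y (Phi y) * dPhi y = g y"
proof -
  have t: "0 < tt y" "tt y < 1" using tt_range[OF y] by auto
  have y0: "0 < y" using y ab by simp
  have s2: "(sin (Phi y))^2 = tt y" using sin_Phi[of y] y t by simp
  have c2: "(cos (Phi y))^2 = 1 - tt y" using s2 by (simp add: cos_squared_eq)
  have G: "Gf X Y (Phi y) = 1 / sqrt (a*b*(c-y)/y)"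
    unfolding Gf_def s2 c2 XYt[OF y0] ..
  have pos1: "0 < a*b*(c-y)/y" using ab y by auto
  have pos2: "0 < y*(y-a)*(b-y)*(c-y)/4" using ab y by (intro divide_pos_pos mult_pos_pos) auto
  have ba: "0 < b - a" using ab by simp
  have L0: "0 \<le> 4 * Gf X Y (Phi y) * dPhi y" unfolding G dPhi_def using t pos1 ab y0 ba
    by (intro mult_nonneg_nonneg) auto
  have R0: "0 \<le> g y" unfolding g_def using mU_pos[OF y] by simp
  have "(4 * Gf X Y (Phi y) * dPhi y)^2 = 16 * (1/(a*b*(c-y)/y)) * ((a*b/((b-a)*y^2))^2 / (4 * tt y * (1 - tt y)))"
    unfolding G dPhi_def by (rule sq_help[OF pos1 t])
  also have "\<dots> = 4 / (y*(y-a)*(b-y)*(c-y))"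
  proof -
    have nz: "y \<noteq> 0" "y - a \<noteq> 0" "b - y \<noteq> 0" "c - y \<noteq> 0" "b - a \<noteq> 0" "a \<noteq> 0" "b \<noteq> 0"
      using ab y by auto
    have TT: "4 * tt y * (1 - tt y) = 4*a*b*(y-a)*(b-y)/((b-a)*y)^2"
      unfolding one_tt[OF y0] unfolding tt_def using nz by (simp add: field_simps power2_eq_square)
    show ?thesis unfolding TT using rat_help[OF nz(6,7,1,2,3,4,5)] by simp
  qed
  also have "\<dots> = (g y)^2" unfolding g_def mU using pos2 by (simp add: power_divide)
  finally show ?thesis using L0 R0 power2_eq_imp_eq by blast
qed

end



context Kctx begin

lemma g_pos: "a < y \<Longrightarrow> y < b \<Longrightarrow> g y > 0"
  unfolding g_def using mU_pos by simp

lemma Phi_pos: assumes "a < y" "y < b" shows "0 < Phi y"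
proof -
  have "0 < tt y" using tt_range assms by auto
  hence "0 < sqrt (tt y)" by simp
  hence "0 < sin (Phi y)" using sin_Phi[of y] assms by simp
  moreover have "Phi y \<ge> 0" using Phi_range[of y] assms by auto
  ultimately show ?thesis by (metis less_eq_real_def sin_zero order.irrefl)
qed

lemma pi2_lt2: "pi/2 < 2" using pi_less_4 by simp

lemma F4_cont: "continuous_on {a..b} (\<lambda>w. 4 * Hf X Y (Phi w))"
proof -
  have "continuous_on {a..b} (Hf X Y \<circ> Phi)"
    using continuous_on_compose[OF Phi_cont continuous_on_subset[OF Hf_cont[OF XY_pos]]]
      Phi_range pi2_lt2 by fastforce
  thus ?thesis by (intro continuous_intros) (simp add: o_def)
qed

lemma F4_deriv: assumes "a < w" "w < b"
  shows "((\<lambda>w. 4 * Hf X Y (Phi w)) has_real_derivative g w) (at w)"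
proof -
  have p: "0 < Phi w" "Phi w < 2" using Phi_pos[OF assms] Phi_range[of w] assms pi2_lt2 by auto
  have "((\<lambda>w. 4 * Hf X Y (Phi w)) has_real_derivative 4 * (Gf X Y (Phi w) * dPhi w)) (at w)"
    using DERIV_cmult[OF DERIV_chain2[OF Hf_deriv[OF XY_pos p] Phi_deriv[OF assms]], of 4] by simp
  thus ?thesis using key_identity[OF assms] by (simp add: mult.assoc)
qed

lemma g_has_integral: assumes "a \<le> y" "y \<le> b"
  shows "(g has_integral (4 * Hf X Y (Phi y))) {a..y}"
proof -
  have "(g has_integral (4 * Hf X Y (Phi y) - 4 * Hf X Y (Phi a))) {a..y}"
  proof (rule fundamental_theorem_of_calculus_interior_strong[of "{}"])
    show "continuous_on {a..y} (\<lambda>w. 4 * Hf X Y (Phi w))"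
      using continuous_on_subset[OF F4_cont] assms by auto
    fix x assume "x \<in> {a<..<y} - {}"
    thus "((\<lambda>w. 4 * Hf X Y (Phi w)) has_vector_derivative g x) (at x)"
      using F4_deriv[of x] assms by (simp add: has_real_derivative_iff_has_vector_derivative)
  qed (use assms in auto)
  thus ?thesis by (simp add: Phi_a)
qed

lemma FK_eq: assumes "a \<le> y" "y \<le> b" shows "FK K y = 4 * Hf X Y (Phi y)"
proof -
  have "FK K y = integral {a..y} g" unfolding FK_def g_def[abs_def] ..
  thus ?thesis using g_has_integral[OF assms] by (simp add: integral_unique)
qed

lemma FK_cont: "continuous_on {a..b} (FK K)"
  using continuous_on_eq[OF F4_cont] FK_eq by auto

lemma FK_deriv: assumes "a < y" "y < b" shows "(FK K has_real_derivative g y) (at y)"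
  using has_field_derivative_transform_within_open[OF F4_deriv[OF assms], of "{a<..<b}"] assms FK_eq
  by auto

lemma FK_a: "FK K a = 0" unfolding FK_def by simp

lemma tau_eq: "tauK K = 2 * FK K b" unfolding tauK_def FK_def ..

lemma FK_strict: assumes "a \<le> y1" "y1 < y2" "y2 \<le> b" shows "FK K y1 < FK K y2"
proof (rule DERIV_pos_imp_increasing_open[OF assms(2)])
  fix x assume "y1 < x" "x < y2"
  hence "a < x" "x < b" using assms by auto
  thus "\<exists>d. (FK K has_real_derivative d) (at x) \<and> 0 < d" using FK_deriv g_pos by blast
qed (use continuous_on_subset[OF FK_cont] assms in auto)

lemma FK_mono: "a \<le> y1 \<Longrightarrow> y1 \<le> y2 \<Longrightarrow> y2 \<le> b \<Longrightarrow> FK K y1 \<le> FK K y2"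
  using FK_strict by (cases "y1 = y2") (auto simp: less_eq_real_def)

lemma tau_pos: "tauK K > 0" using FK_strict[of a b] ab by (simp add: tau_eq FK_a)

lemma tau_Hf: "tauK K = 8 * Hf X Y (pi/2)" using FK_eq[of b] ab by (simp add: tau_eq Phi_b)

end



context Kctx begin

abbreviation "T \<equiv> tauK K"
definition "tri t = \<bar>t - T * of_int (round (t / T))\<bar>"

lemma tri_alt: "tri t = T * \<bar>t/T - of_int (round (t/T))\<bar>"
proof -
  have "t - T * of_int (round (t / T)) = T * (t/T - of_int (round (t/T)))"
    using tau_pos by (simp add: field_simps)
  thus ?thesis unfolding tri_def using tau_pos by (simp add: abs_mult)
qed

lemma tri_le: "tri t \<le> \<bar>t - of_int k * T\<bar>"
proof -
  have "t - of_int k * T = T * (t/T - of_int k)" using tau_pos by (simp add: field_simps)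
  hence "\<bar>t - of_int k * T\<bar> = T * \<bar>t/T - of_int k\<bar>" using tau_pos by (simp add: abs_mult)
  thus ?thesis unfolding tri_alt using round_diff_minimal[of "t/T" k] tau_pos
    by (simp add: mult_left_mono)
qed

lemma tri_half: "0 \<le> tri t \<and> tri t \<le> T/2"
  unfolding tri_alt using of_int_round_abs_le[of "t/T"] tau_pos
  by (auto simp: abs_minus_commute intro: mult_left_mono[of _ "1/2", simplified])

lemma tri_eq: assumes "\<bar>t - of_int k * T\<bar> \<le> T/2" shows "tri t = \<bar>t - of_int k * T\<bar>"
proof (cases "round (t/T) = k")
  case True thus ?thesis unfolding tri_def by (simp add: mult.commute)
next
  case False
  hence "\<bar>round (t/T) - k\<bar> \<ge> 1" by linarith
  hence "(1::real) \<le> \<bar>of_int (round (t/T) - k)\<bar>"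
    by (metis of_int_1_le_iff of_int_abs)
  hence r1: "(1::real) \<le> \<bar>of_int (round (t/T)) - of_int k\<bar>" by simp
  have "of_int (round (t/T)) * T - of_int k * T = T * (of_int (round (t/T)) - of_int k)"
    by (simp add: algebra_simps)
  hence "\<bar>of_int (round (t/T)) * T - of_int k * T\<bar> = T * \<bar>of_int (round (t/T)) - of_int k\<bar>"
    using tau_pos by (simp add: abs_mult)
  moreover have "T * 1 \<le> T * \<bar>of_int (round (t/T)) - of_int k\<bar>" using tau_pos r1
    by (intro mult_left_mono) auto
  ultimately have r2: "\<bar>of_int (round (t/T)) * T - of_int k * T\<bar> \<ge> T" by simp
  have tr: "\<bar>p - q\<bar> \<le> \<bar>t - p\<bar> + \<bar>t - q\<bar>" for p q :: real by arith
  have "tri t \<ge> T/2" unfolding tri_def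
    using assms r2 tr[of "of_int (round (t / T)) * T" "of_int k * T"] by (simp add: mult.commute)
  thus ?thesis using tri_le[of t k] assms by linarith
qed

lemma tri_lip: "\<bar>tri t - tri s\<bar> \<le> \<bar>t - s\<bar>"
proof -
  have "tri t \<le> \<bar>t - of_int (round (s/T)) * T\<bar>" by (rule tri_le)
  also have "\<dots> \<le> \<bar>t - s\<bar> + tri s" unfolding tri_def by (simp add: mult.commute)
  finally have 1: "tri t \<le> \<bar>t - s\<bar> + tri s" .
  have "tri s \<le> \<bar>s - of_int (round (t/T)) * T\<bar>" by (rule tri_le)
  also have "\<dots> \<le> \<bar>t - s\<bar> + tri t" unfolding tri_def by (simp add: mult.commute)
  finally have 2: "tri s \<le> \<bar>t - s\<bar> + tri t" .
  from 1 2 show ?thesis by linarith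
qed

lemma tri_cont: "continuous_on S tri"
proof -
  have "continuous (at t) tri" for t
    unfolding continuous_at_eps_delta dist_real_def
  proof (intro allI impI)
    fix e :: real assume "0 < e"
    thus "\<exists>d>0. \<forall>x. \<bar>x - t\<bar> < d \<longrightarrow> \<bar>tri x - tri t\<bar> < e"
      using tri_lip by (metis order.strict_trans1)
  qed
  thus ?thesis by (simp add: continuous_at_imp_continuous_on)
qed

lemma FK_b: "FK K b = T/2" using tau_eq by simp

lemma yhalf_spec: assumes "0 \<le> t" "t \<le> T/2"
  shows "a \<le> yhalf K t \<and> yhalf K t \<le> b \<and> FK K (yhalf K t) = t"
proof -
  obtain y where y: "a \<le> y" "y \<le> b" "FK K y = t"
    using IVT'[of "FK K" a t b] FK_a FK_b assms FK_cont ab by auto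
  have "yhalf K t = y" unfolding yhalf_def
  proof (rule the_equality)
    fix z assume z: "a \<le> z \<and> z \<le> b \<and> FK K z = t"
    show "z = y"
    proof (rule ccontr)
      assume "z \<noteq> y"
      hence "z < y \<or> y < z" by auto
      thus False using FK_strict z y by fastforce
    qed
  qed (use y in auto)
  thus ?thesis using y by simp
qed

lemma yhalf_unique: assumes "a \<le> y" "y \<le> b" shows "yhalf K (FK K y) = y"
proof -
  have t: "0 \<le> FK K y" "FK K y \<le> T/2" using FK_mono[of a y] FK_mono[of y b] assms FK_a FK_b by auto
  have s: "a \<le> yhalf K (FK K y)" "yhalf K (FK K y) \<le> b" "FK K (yhalf K (FK K y)) = FK K y"
    using yhalf_spec[OF t] by auto
  show ?thesis
  proof (rule ccontr)
    assume "yhalf K (FK K y) \<noteq> y"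
    hence "yhalf K (FK K y) < y \<or> y < yhalf K (FK K y)" by auto
    thus False using FK_strict s assms by fastforce
  qed
qed

lemma FK_image: "FK K ` {a..b} = {0..T/2}"
proof
  show "FK K ` {a..b} \<subseteq> {0..T/2}" using FK_mono FK_a FK_b by fastforce
  show "{0..T/2} \<subseteq> FK K ` {a..b}"
  proof
    fix t assume "t \<in> {0..T/2}"
    hence "a \<le> yhalf K t \<and> yhalf K t \<le> b \<and> FK K (yhalf K t) = t" using yhalf_spec by auto
    thus "t \<in> FK K ` {a..b}" by force
  qed
qed

lemma yhalf_cont: "continuous_on {0..T/2} (yhalf K)"
  using continuous_on_inv[OF FK_cont compact_Icc] yhalf_unique FK_image by auto

lemma yK_eq: "yK K t = yhalf K (tri t)" unfolding yK_def tri_def ..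

lemma yK_spec: "a \<le> yK K t \<and> yK K t \<le> b \<and> FK K (yK K t) = tri t"
  unfolding yK_eq using yhalf_spec tri_half by auto

lemma yK_cont: "continuous_on S (yK K)"
proof -
  have "continuous_on S (yhalf K \<circ> tri)"
    using continuous_on_compose[OF tri_cont continuous_on_subset[OF yhalf_cont]] tri_half by fastforce
  thus ?thesis unfolding yK_eq[abs_def] o_def .
qed

lemma yhalf_mono: assumes "0 \<le> t1" "t1 \<le> t2" "t2 \<le> T/2" shows "yhalf K t1 \<le> yhalf K t2"
proof (rule ccontr)
  assume "\<not> ?thesis"
  hence "yhalf K t2 < yhalf K t1" by simp
  thus False using FK_strict[of "yhalf K t2" "yhalf K t1"] yhalf_spec[of t1] yhalf_spec[of t2] assms by auto
qed

lemma yhalf_0: "yhalf K 0 = a" using yhalf_unique[of a] FK_a ab by simp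
lemma yhalf_T2: "yhalf K (T/2) = b" using yhalf_unique[of b] FK_b ab by simp

end



lemma alg_deriv:
  fixes y z zd K lam :: real
  assumes "2*z*zd = (y^2-y)*(2*y-1)/2 - K" "lam = z + (y^2-y)/2" "lam \<noteq> 0"
  shows "(-K*(zd + (2*y-1)/2)/lam^2 - 1) * z = -(lam - ((1 + K/lam - y)^2 - (1 + K/lam - y))/2)"
proof -
  have h: "z*zd = ((y^2-y)*(2*y-1)/2 - K)/2" using assms(1) by (simp add: field_simps)
  have "z*(zd + (2*y-1)/2) = z*zd + z*(2*y-1)/2" by (simp add: algebra_simps)
  also have "\<dots> = ((2*y-1)*lam - K)/2" unfolding h assms(2) by (simp add: field_simps)
  finally have "z*(zd + (2*y-1)/2) = ((2*y-1)*lam - K)/2" .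
  moreover have "(-K*(zd + (2*y-1)/2)/lam^2 - 1) * z = -K*(z*(zd + (2*y-1)/2))/lam^2 - z"
    by (simp add: algebra_simps)
  ultimately have "(-K*(zd + (2*y-1)/2)/lam^2 - 1) * z = -K*(((2*y-1)*lam - K)/2)/lam^2 - z"
    by (simp only:)
  also have "\<dots> = -K*((2*y-1)*lam - K)/(2*lam^2) - z" by simp
  also have "\<dots> = -(lam - ((1 + K/lam - y)^2 - (1 + K/lam - y))/2)"
    using assms(2,3) by (simp add: field_simps power2_eq_square) algebra
  finally show ?thesis .
qed

lemma alg_conj:
  fixes y z K lam :: real
  assumes "z^2 = (y^2-y)^2/4 - K*y" "lam = z + (y^2-y)/2" "lam \<noteq> 0"
  shows "(lam - ((1 + K/lam - y)^2 - (1 + K/lam - y))/2)^2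
       = (((1 + K/lam - y)^2 - (1 + K/lam - y))^2/4 - K*(1 + K/lam - y))"
proof -
  define p where "p = 1 + K/lam - y"
  have lp: "lam * p = lam + K - lam*y" unfolding p_def using assms(3) by (simp add: field_simps)
  have E: "lam*y^2 - (lam+K)*y - lam^2 = 0"
  proof -
    have "(lam - (y^2-y)/2)^2 = (y^2-y)^2/4 - K*y" using assms(1,2) by simp
    thus ?thesis unfolding power2_eq_square by algebra
  qed
  have "lam * (lam*p^2 - (lam+K)*p - lam^2) = lam*(lam*y^2 - (lam+K)*y - lam^2)"
  proof -
    have "lam * (lam*p^2 - (lam+K)*p - lam^2) = (lam*p)^2 - (lam+K)*(lam*p) - lam^3"
      by (simp add: power2_eq_square power3_eq_cube algebra_simps)
    also have "\<dots> = lam*(lam*y^2 - (lam+K)*y - lam^2)" unfolding lp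
      by (simp add: power2_eq_square power3_eq_cube algebra_simps)
    finally show ?thesis .
  qed
  hence "lam*p^2 - (lam+K)*p - lam^2 = 0" using E assms(3) by simp
  thus ?thesis unfolding p_def[symmetric] by (simp add: power2_eq_square algebra_simps)
qed




lemma IVT_pos:
  fixes f :: "real \<Rightarrow> real"
  assumes "continuous_on {p..q} f" "f p > 0" "\<And>x. p < x \<Longrightarrow> x < q \<Longrightarrow> f x \<noteq> 0"
    and "p \<le> x" "x < q"
  shows "f x > 0"
proof (rule ccontr)
  assume "\<not> f x > 0"
  hence "f x \<le> 0" by simp
  then obtain z where z: "p \<le> z" "z \<le> x" "f z = 0"
    using IVT2'[of f x 0 p] assms continuous_on_subset[OF assms(1), of "{p..x}"] by auto
  have "z \<noteq> p" using z assms by auto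
  thus False using z assms by force
qed

context Kctx begin

definition "Qf y = - 2 * U K y"
definition "sQ y = sqrt (Qf y)"
definition "lp y = sQ y + (y^2-y)/2"
definition "lm y = - sQ y + (y^2-y)/2"
definition "php y = 1 + K/lp y - y"
definition "phm y = 1 + K/lm y - y"
definition "wp y = lp y - ((php y)^2 - php y)/2"
definition "wm y = lm y - ((phm y)^2 - phm y)/2"
definition "ma = (1-a)/2"
definition "mb = (1-b)/2"

lemma Qf_poly: "Qf y = (y^2-y)^2/4 - K*y"
  unfolding Qf_def U_def by (simp add: power2_eq_square field_simps)
lemma Qf_fact: "Qf y = y*(y-a)*(b-y)*(c-y)/4" unfolding Qf_def mU ..
lemma g_Qf: "g y = 1 / sqrt (Qf y)" unfolding g_def Qf_def ..

lemma Qf_nonneg: "a \<le> y \<Longrightarrow> y \<le> b \<Longrightarrow> 0 \<le> Qf y"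
  unfolding Qf_fact using ab by (intro divide_nonneg_pos mult_nonneg_nonneg) auto

lemma Qf_pos: "a < y \<Longrightarrow> y < b \<Longrightarrow> 0 < Qf y"
  unfolding Qf_def using mU_pos by simp

lemma Qf_zero: "Qf y = 0 \<Longrightarrow> y = 0 \<or> y = a \<or> y = b \<or> y = c"
  unfolding Qf_fact by auto

lemma sQ_sq: "a \<le> y \<Longrightarrow> y \<le> b \<Longrightarrow> (sQ y)^2 = (y^2-y)^2/4 - K*y"
  unfolding sQ_def using Qf_nonneg Qf_poly by simp

lemma lp_neg: assumes "a \<le> y" "y \<le> b" shows "lp y < 0"
proof -
  have y: "0 < y" "y < 1" using assms ab by auto
  have e: "((y - y^2)/2)^2 = (y^2-y)^2/4" by (simp add: power2_eq_square field_simps)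
  have "Qf y < ((y - y^2)/2)^2" unfolding Qf_poly e using y K by simp
  hence "sQ y < sqrt (((y - y^2)/2)^2)" unfolding sQ_def by (rule real_sqrt_less_mono)
  also have "\<dots> = (y - y^2)/2"
  proof -
    have "0 \<le> (y - y^2)/2" using y by (simp add: power2_eq_square mult_left_le_one_le)
    thus ?thesis by simp
  qed
  finally show ?thesis unfolding lp_def by (simp add: field_simps)
qed

lemma lm_neg: assumes "a \<le> y" "y \<le> b" shows "lm y < 0"
proof -
  have y: "0 < y" "y < 1" using assms ab by auto
  have "0 \<le> sQ y" unfolding sQ_def using Qf_nonneg assms by simp
  moreover have "y^2 - y < 0" using y by (simp add: power2_eq_square)
  ultimately show ?thesis unfolding lm_def by simp
qed

lemma wp_sq: assumes "a \<le> y" "y \<le> b" shows "(wp y)^2 = Qf (php y)"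
  unfolding wp_def Qf_poly php_def
  using alg_conj[OF sQ_sq[OF assms] lp_def[of y]] lp_neg[OF assms] by simp

lemma wm_sq: assumes "a \<le> y" "y \<le> b" shows "(wm y)^2 = Qf (phm y)"
proof -
  have "(- sQ y)^2 = (y^2-y)^2/4 - K*y" using sQ_sq[OF assms] by simp
  thus ?thesis unfolding wm_def Qf_poly phm_def
    using alg_conj[of "- sQ y" y K "lm y"] lm_def[of y] lm_neg[OF assms] by simp
qed

end



context Kctx begin

definition "Qd y = (y^2-y)*(2*y-1)/2 - K"
definition "sd y = inverse (sqrt (Qf y)) / 2 * Qd y"

lemma Qf_deriv: "(Qf has_real_derivative Qd y) (at y)"
proof -
  have "((\<lambda>y. (y^2-y)^2/4 - K*y) has_real_derivative
     (2 * (y^2-y) * (2*y - 1))/4 - K) (at y)"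
    by (rule derivative_eq_intros refl | simp)+
  moreover have "(2 * (y^2-y) * (2*y - 1))/4 - K = Qd y" unfolding Qd_def by simp
  moreover have "Qf = (\<lambda>y. (y^2-y)^2/4 - K*y)" using Qf_poly by auto
  ultimately show ?thesis by simp
qed

lemma sQ_deriv: assumes "a < y" "y < b" shows "(sQ has_real_derivative sd y) (at y)"
  unfolding sQ_def[abs_def] sd_def using DERIV_chain2[OF DERIV_real_sqrt[OF Qf_pos[OF assms]] Qf_deriv] .

lemma sQ_pos: "a < y \<Longrightarrow> y < b \<Longrightarrow> 0 < sQ y" unfolding sQ_def using Qf_pos by simp

lemma sQ_sd: assumes "a < y" "y < b" shows "2 * sQ y * sd y = Qd y"
  unfolding sd_def sQ_def using Qf_pos[OF assms] by (simp add: field_simps)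

lemma php_deriv: assumes "a < y" "y < b"
  shows "(php has_real_derivative (-K*(sd y + (2*y-1)/2)/(lp y)^2 - 1)) (at y)"
proof -
  have l: "(lp has_real_derivative sd y + (2*y-1)/2) (at y)"
    unfolding lp_def[abs_def] by (rule derivative_eq_intros sQ_deriv[OF assms] refl | simp)+
  have "lp y \<noteq> 0" using lp_neg assms by (metis less_irrefl less_imp_le)
  hence "(php has_real_derivative (0 * lp y - K * (sd y + (2*y-1)/2)) / (lp y * lp y) - 1) (at y)"
    unfolding php_def[abs_def] apply (intro derivative_eq_intros l refl) using l by (auto simp: algebra_simps)
  thus ?thesis by (simp add: power2_eq_square)
qed

lemma phm_deriv: assumes "a < y" "y < b"
  shows "(phm has_real_derivative (-K*(- sd y + (2*y-1)/2)/(lm y)^2 - 1)) (at y)"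
proof -
  have l: "(lm has_real_derivative - sd y + (2*y-1)/2) (at y)"
    unfolding lm_def[abs_def] by (rule derivative_eq_intros sQ_deriv[OF assms] refl | simp)+
  have "lm y \<noteq> 0" using lm_neg assms by (metis less_irrefl less_imp_le)
  hence "(phm has_real_derivative (0 * lm y - K * (- sd y + (2*y-1)/2)) / (lm y * lm y) - 1) (at y)"
    unfolding phm_def[abs_def] apply (intro derivative_eq_intros l refl) using l by (auto simp: algebra_simps)
  thus ?thesis by (simp add: power2_eq_square)
qed

lemma php_d_id: assumes "a < y" "y < b"
  shows "(-K*(sd y + (2*y-1)/2)/(lp y)^2 - 1) * sQ y = - wp y"
proof -
  have "lp y \<noteq> 0" using lp_neg assms by (metis less_irrefl less_imp_le)
  moreover have "2 * sQ y * sd y = (y^2-y)*(2*y-1)/2 - K" using sQ_sd[OF assms] unfolding Qd_def .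
  ultimately show ?thesis unfolding wp_def php_def using alg_deriv[OF _ lp_def] by simp
qed

lemma phm_d_id: assumes "a < y" "y < b"
  shows "(-K*(- sd y + (2*y-1)/2)/(lm y)^2 - 1) * sQ y = wm y"
proof -
  have "lm y \<noteq> 0" using lm_neg assms by (metis less_irrefl less_imp_le)
  moreover have "2 * (- sQ y) * (- sd y) = (y^2-y)*(2*y-1)/2 - K" using sQ_sd[OF assms] unfolding Qd_def by simp
  ultimately have "(-K*(- sd y + (2*y-1)/2)/(lm y)^2 - 1) * (- sQ y) = - wm y"
    unfolding wm_def phm_def using alg_deriv[where z="- sQ y" and zd="- sd y" and y=y and K=K and lam="lm y"] lm_def[of y] by simp
  thus ?thesis by simp
qed

end



context Kctx begin

lemma root_ne: "r \<in> {a,b,c} \<Longrightarrow> r*(1-r)^2 = 4*K \<and> r \<noteq> 0 \<and> r \<noteq> 1"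
  using roots ab by auto

lemma pair: assumes "r \<in> {a,b,c}" "lam = (r^2-r)/2" shows "1 + K/lam - r = (1-r)/2"
proof -
  have r: "r*(1-r)^2 = 4*K" "r \<noteq> 0" "r - 1 \<noteq> 0" using root_ne[OF assms(1)] by auto
  have Ke: "K = r*(1-r)^2/4" using r(1) by simp
  have le: "lam = r*(r-1)/2" using assms(2) by (simp add: power2_eq_square algebra_simps)
  have "K/lam = (r*(1-r)^2/4) / (r*(r-1)/2)" by (subst Ke, subst le, rule refl)
  also have "\<dots> = (r-1)/2" using r(2,3) by (simp add: field_simps power2_eq_square)
  finally show ?thesis by simp
qed

lemma sQ_a: "sQ a = 0" unfolding sQ_def Qf_fact by simp
lemma lp_a: "lp a = (a^2-a)/2" unfolding lp_def sQ_a by simp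
lemma lm_a: "lm a = (a^2-a)/2" unfolding lm_def sQ_a by simp
lemma php_a: "php a = ma" unfolding php_def ma_def by (rule pair) (auto simp: lp_a)
lemma phm_a: "phm a = ma" unfolding phm_def ma_def by (rule pair) (auto simp: lm_a)
lemma wpa_pos: "wp a > 0" and wma_pos: "wm a > 0"
proof -
  have e: "(a^2-a)/2 - (ma^2 - ma)/2 = (1-a)*(1-3*a)/8" unfolding ma_def
    by (simp add: power2_eq_square field_simps)
  have "(1-a)*(1-3*a)/8 > 0" using ab by (simp add: mult_pos_pos)
  hence p: "(a^2-a)/2 - (ma^2 - ma)/2 > 0" unfolding e .
  show "wp a > 0" unfolding wp_def php_a lp_a using p .
  show "wm a > 0" unfolding wm_def phm_a lm_a using p .
qed

lemma sQ_mb: "sQ mb = (b*(1-b) - mb*(1-mb))/2"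
proof -
  have nn: "0 \<le> (b*(1-b) - mb*(1-mb))/2"
  proof -
    have "(b*(1-b) - mb*(1-mb))/2 = (1-b)*(3*b-1)/8" unfolding mb_def
      by (simp add: field_simps)
    moreover have "(1-b)*(3*b-1)/8 \<ge> 0" using ab by simp
    ultimately show ?thesis by simp
  qed
  have "Qf mb = ((b*(1-b) - mb*(1-mb))/2)^2"
    unfolding Qf_poly mb_def using roots(2) by (simp add: power2_eq_square field_simps) algebra
  thus ?thesis unfolding sQ_def using nn by simp
qed

lemma lp_mb: "lp mb = b*(1-b)/2 - mb*(1-mb)"
  unfolding lp_def sQ_mb by (simp add: power2_eq_square field_simps)
lemma lm_mb: "lm mb = - b*(1-b)/2"
  unfolding lm_def sQ_mb by (simp add: power2_eq_square field_simps)

lemma order_m: "a < mb" "mb < ma" "ma < b"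
proof -
  have pmb: "(mb-a)*(mb-b)*(mb-c) = (1-b)*(3*b-1)^2/8"
    unfolding pfact[symmetric] mb_def using roots(2) by (simp add: power2_eq_square field_simps)
  have "(1-b)*(3*b-1)^2/8 > 0" using ab by simp
  moreover have "mb < b" "mb < c" unfolding mb_def using ab by auto
  ultimately have "(mb-a)*((b-mb)*(c-mb)) > 0" using pmb by (simp add: algebra_simps)
  moreover have "(b-mb)*(c-mb) > 0" using \<open>mb < b\<close> \<open>mb < c\<close> by simp
  ultimately show "a < mb" by (simp add: zero_less_mult_iff)
  have pma: "(ma-a)*(ma-b)*(ma-c) = (1-a)*(3*a-1)^2/8"
    unfolding pfact[symmetric] ma_def using roots(1) by (simp add: power2_eq_square field_simps)
  have "(1-a)*(3*a-1)^2/8 > 0" using ab by simp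
  moreover have "a < ma" "ma < c" unfolding ma_def using ab by auto
  ultimately have "(ma-b)*((ma-a)*(c-ma)) < 0" using pma by (simp add: algebra_simps)
  moreover have "(ma-a)*(c-ma) > 0" using \<open>a < ma\<close> \<open>ma < c\<close> by simp
  ultimately show "ma < b" using \<open>a < ma\<close> \<open>ma < c\<close> by (simp add: mult_less_0_iff)
  show "mb < ma" unfolding ma_def mb_def using ab by simp
qed

lemma php_mb: "php mb = mb"
proof -
  have "lp mb < 0" using lp_neg[of mb] order_m by simp
  hence nz: "lp mb \<noteq> 0" by simp
  have "K = - b * lp mb" unfolding lp_mb unfolding mb_def using roots(2)
    by (simp add: power2_eq_square field_simps)
  hence "K / lp mb = -b" using nz by (simp add: field_simps)
  thus ?thesis unfolding php_def mb_def by (simp add: field_simps)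
qed

lemma phm_mb: "phm mb = b"
proof -
  have nz: "b*(1-b) \<noteq> 0" using ab by simp
  have "K / lm mb = -(1-b)/2" unfolding lm_mb using roots(2) nz
    by (simp add: power2_eq_square field_simps)
  thus ?thesis unfolding phm_def by (simp add: mb_def field_simps)
qed

end



context Kctx begin

lemma mb_le: "a < mb" "mb < b" using order_m by auto

lemma not_m: assumes "a < y" "y < mb" "r \<in> {a,b,c}" shows "y \<noteq> (1-r)/2"
proof
  assume "y = (1-r)/2"
  moreover have "(1-c)/2 < a" using ab by simp
  ultimately show False using assms order_m unfolding ma_def mb_def by auto
qed

lemma wp_ne: assumes "a < y" "y < mb" shows "wp y \<noteq> 0"
proof
  assume w: "wp y = 0"
  have yab: "a \<le> y" "y \<le> b" using assms mb_le by auto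
  have "Qf (php y) = 0" using wp_sq[OF yab] w by simp
  hence r: "php y = 0 \<or> php y \<in> {a,b,c}" using Qf_zero by auto
  have l: "lp y = ((php y)^2 - php y)/2" using w unfolding wp_def by simp
  have ln: "lp y \<noteq> 0" using lp_neg[OF yab] by simp
  show False
  proof (cases "php y = 0")
    case True thus False using l ln by simp
  next
    case False
    hence rr: "php y \<in> {a,b,c}" using r by simp
    have "y = 1 + K/lp y - php y" unfolding php_def by simp
    also have "\<dots> = (1 - php y)/2" by (rule pair[OF rr l])
    finally show False using not_m[OF assms rr] by simp
  qed
qed

lemma wm_ne: assumes "a < y" "y < mb" shows "wm y \<noteq> 0"
proof
  assume w: "wm y = 0"
  have yab: "a \<le> y" "y \<le> b" using assms mb_le by auto
  have "Qf (phm y) = 0" using wm_sq[OF yab] w by simp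
  hence r: "phm y = 0 \<or> phm y \<in> {a,b,c}" using Qf_zero by auto
  have l: "lm y = ((phm y)^2 - phm y)/2" using w unfolding wm_def by simp
  have ln: "lm y \<noteq> 0" using lm_neg[OF yab] by simp
  show False
  proof (cases "phm y = 0")
    case True thus False using l ln by simp
  next
    case False
    hence rr: "phm y \<in> {a,b,c}" using r by simp
    have "y = 1 + K/lm y - phm y" unfolding phm_def by simp
    also have "\<dots> = (1 - phm y)/2" by (rule pair[OF rr l])
    finally show False using not_m[OF assms rr] by simp
  qed
qed

lemma sQ_cont: "continuous_on S sQ"
  unfolding sQ_def[abs_def] Qf_poly by (intro continuous_intros) auto

lemma lp_cont: "continuous_on {a..b} lp"
  unfolding lp_def[abs_def] by (intro continuous_intros sQ_cont) auto
lemma lm_cont: "continuous_on {a..b} lm"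
  unfolding lm_def[abs_def] by (intro continuous_intros sQ_cont) auto

lemma php_cont: "continuous_on {a..b} php"
proof -
  have "\<forall>y\<in>{a..b}. lp y \<noteq> 0" using lp_neg by force
  thus ?thesis unfolding php_def[abs_def] by (intro continuous_intros lp_cont) auto
qed

lemma phm_cont: "continuous_on {a..b} phm"
proof -
  have "\<forall>y\<in>{a..b}. lm y \<noteq> 0" using lm_neg by force
  thus ?thesis unfolding phm_def[abs_def] by (intro continuous_intros lm_cont) auto
qed

lemma wp_cont: "continuous_on {a..b} wp"
  unfolding wp_def[abs_def] by (intro continuous_intros lp_cont php_cont) auto
lemma wm_cont: "continuous_on {a..b} wm"
  unfolding wm_def[abs_def] by (intro continuous_intros lm_cont phm_cont) auto

lemma sub_amb: "{a..mb} \<subseteq> {a..b}" using mb_le by auto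

lemma wp_pos: "a \<le> y \<Longrightarrow> y < mb \<Longrightarrow> wp y > 0"
  using IVT_pos[OF continuous_on_subset[OF wp_cont sub_amb] wpa_pos wp_ne] by blast
lemma wm_pos: "a \<le> y \<Longrightarrow> y < mb \<Longrightarrow> wm y > 0"
  using IVT_pos[OF continuous_on_subset[OF wm_cont sub_amb] wma_pos wm_ne] by blast

lemma ma_ab: "a < ma" "ma < b" using order_m by auto

lemma php_in: assumes "a \<le> y" "y < mb" shows "a < php y \<and> php y < b"
proof -
  have ne: "php x \<noteq> a \<and> php x \<noteq> b" if "a < x" "x < mb" for x
  proof -
    have "Qf (php x) > 0" using wp_sq[of x] wp_pos[of x] that mb_le
      by (metis less_imp_le order.strict_trans zero_less_power2 less_irrefl)
    thus ?thesis unfolding Qf_fact by auto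
  qed
  have c1: "continuous_on {a..mb} (\<lambda>x. php x - a)" "continuous_on {a..mb} (\<lambda>x. b - php x)"
    using continuous_on_subset[OF php_cont sub_amb] by (intro continuous_intros; simp)+
  have "php y - a > 0"
  proof (rule IVT_pos[OF c1(1) _ _ assms])
    show "php a - a > 0" using ma_ab php_a by simp
    fix x assume "a < x" "x < mb" thus "php x - a \<noteq> 0" using ne[of x] by simp
  qed
  moreover have "b - php y > 0"
  proof (rule IVT_pos[OF c1(2) _ _ assms])
    show "b - php a > 0" using ma_ab php_a by simp
    fix x assume "a < x" "x < mb" thus "b - php x \<noteq> 0" using ne[of x] by simp
  qed
  ultimately show ?thesis by simp
qed

lemma phm_in: assumes "a \<le> y" "y < mb" shows "a < phm y \<and> phm y < b"
proof -
  have ne: "phm x \<noteq> a \<and> phm x \<noteq> b" if "a < x" "x < mb" for x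
  proof -
    have "Qf (phm x) > 0" using wm_sq[of x] wm_pos[of x] that mb_le
      by (metis less_imp_le order.strict_trans zero_less_power2 less_irrefl)
    thus ?thesis unfolding Qf_fact by auto
  qed
  have c1: "continuous_on {a..mb} (\<lambda>x. phm x - a)" "continuous_on {a..mb} (\<lambda>x. b - phm x)"
    using continuous_on_subset[OF phm_cont sub_amb] by (intro continuous_intros; simp)+
  have "phm y - a > 0"
  proof (rule IVT_pos[OF c1(1) _ _ assms])
    show "phm a - a > 0" using ma_ab phm_a by simp
    fix x assume "a < x" "x < mb" thus "phm x - a \<noteq> 0" using ne[of x] by simp
  qed
  moreover have "b - phm y > 0"
  proof (rule IVT_pos[OF c1(2) _ _ assms])
    show "b - phm a > 0" using ma_ab phm_a by simp
    fix x assume "a < x" "x < mb" thus "b - phm x \<noteq> 0" using ne[of x] by simp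
  qed
  ultimately show ?thesis by simp
qed

end



context Kctx begin

lemma php_img: "php ` {a..mb} \<subseteq> {a..b}"
proof
  fix z assume "z \<in> php ` {a..mb}"
  then obtain y where y: "a \<le> y" "y \<le> mb" "z = php y" by auto
  show "z \<in> {a..b}"
  proof (cases "y = mb")
    case True thus ?thesis using y php_mb mb_le by auto
  next
    case False thus ?thesis using y php_in[of y] by auto
  qed
qed

lemma phm_img: "phm ` {a..mb} \<subseteq> {a..b}"
proof
  fix z assume "z \<in> phm ` {a..mb}"
  then obtain y where y: "a \<le> y" "y \<le> mb" "z = phm y" by auto
  show "z \<in> {a..b}"
  proof (cases "y = mb")
    case True thus ?thesis using y phm_mb mb_le by auto
  next
    case False thus ?thesis using y phm_in[of y] by auto
  qed
qed

lemma FK_mb: "FK K mb = T/6" and FK_ma: "FK K ma = T/3"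
proof -
  have cFp: "continuous_on {a..mb} (\<lambda>y. FK K (php y))"
    using continuous_on_compose2[OF FK_cont continuous_on_subset[OF php_cont sub_amb] php_img] .
  have cFm: "continuous_on {a..mb} (\<lambda>y. FK K (phm y))"
    using continuous_on_compose2[OF FK_cont continuous_on_subset[OF phm_cont sub_amb] phm_img] .
  have cF: "continuous_on {a..mb} (FK K)" using continuous_on_subset[OF FK_cont sub_amb] .
  have "(\<lambda>y. FK K (php y) + FK K y) mb = (\<lambda>y. FK K (php y) + FK K y) a"
  proof (rule DERIV_isconst_end[OF mb_le(1)])
    show "continuous_on {a..mb} (\<lambda>y. FK K (php y) + FK K y)" using cFp cF by (intro continuous_intros)
    fix y assume y: "a < y" "y < mb"
    have yb: "a < y" "y < b" using y mb_le by auto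
    have pin: "a < php y" "php y < b" using php_in[of y] y by auto
    have d: "((\<lambda>y. FK K (php y) + FK K y) has_real_derivative
        g (php y) * (-K*(sd y + (2*y-1)/2)/(lp y)^2 - 1) + g y) (at y)"
      using DERIV_chain2[OF FK_deriv[OF pin] php_deriv[OF yb]] FK_deriv[OF yb] by (intro derivative_intros)
    have w: "wp y > 0" using wp_pos y by simp
    have s: "sQ y > 0" using sQ_pos yb by simp
    have g1: "g (php y) = 1 / wp y" unfolding g_Qf using wp_sq[of y] yb w by (simp flip: wp_sq)
    have g2: "g y = 1 / sQ y" unfolding g_Qf sQ_def ..
    have dd: "(-K*(sd y + (2*y-1)/2)/(lp y)^2 - 1) = - wp y / sQ y"
      using php_d_id[OF yb] s by (simp add: field_simps)
    have "g (php y) * (-K*(sd y + (2*y-1)/2)/(lp y)^2 - 1) + g y = 0"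
      unfolding g1 g2 dd using w s by simp
    thus "((\<lambda>y. FK K (php y) + FK K y) has_real_derivative 0) (at y)" using d by simp
  qed
  hence e1: "2 * FK K mb = FK K ma" using php_mb php_a FK_a by simp
  have "(\<lambda>y. FK K (phm y) - FK K y) mb = (\<lambda>y. FK K (phm y) - FK K y) a"
  proof (rule DERIV_isconst_end[OF mb_le(1)])
    show "continuous_on {a..mb} (\<lambda>y. FK K (phm y) - FK K y)" using cFm cF by (intro continuous_intros)
    fix y assume y: "a < y" "y < mb"
    have yb: "a < y" "y < b" using y mb_le by auto
    have pin: "a < phm y" "phm y < b" using phm_in[of y] y by auto
    have d: "((\<lambda>y. FK K (phm y) - FK K y) has_real_derivative
        g (phm y) * (-K*(- sd y + (2*y-1)/2)/(lm y)^2 - 1) - g y) (at y)"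
      using DERIV_chain2[OF FK_deriv[OF pin] phm_deriv[OF yb]] FK_deriv[OF yb] by (intro derivative_intros)
    have w: "wm y > 0" using wm_pos y by simp
    have s: "sQ y > 0" using sQ_pos yb by simp
    have g1: "g (phm y) = 1 / wm y" unfolding g_Qf using wm_sq[of y] yb w by (simp flip: wm_sq)
    have g2: "g y = 1 / sQ y" unfolding g_Qf sQ_def ..
    have dd: "(-K*(- sd y + (2*y-1)/2)/(lm y)^2 - 1) = wm y / sQ y"
      using phm_d_id[OF yb] s by (simp add: field_simps)
    have "g (phm y) * (-K*(- sd y + (2*y-1)/2)/(lm y)^2 - 1) - g y = 0"
      unfolding g1 g2 dd using w s by simp
    thus "((\<lambda>y. FK K (phm y) - FK K y) has_real_derivative 0) (at y)" using d by simp
  qed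
  hence e2: "T/2 - FK K mb = FK K ma" using phm_mb phm_a FK_a FK_b by simp
  from e1 e2 show "FK K mb = T/6" "FK K ma = T/3" by linarith+
qed

lemma yhalf_T6: "yhalf K (T/6) = mb" using yhalf_unique[of mb] FK_mb order_m by simp
lemma yhalf_T3: "yhalf K (T/3) = ma" using yhalf_unique[of ma] FK_ma order_m by simp

end



lemma pi2_lt2': "pi/2 < 2" using pi_less_4 by simp

lemma landen_alg:
  fixes x y S C D :: real
  assumes "C^2 + S^2 = 1" "D = x+y+(x-y)*S^2" "D \<noteq> 0"
  shows "1 - (2*x*S/D)^2 = C^2 * (4*(((x+y)/2)^2*C^2 + x*y*S^2)) / D^2"
    and "x^2*(1 - (2*x*S/D)^2) + y^2*(2*x*S/D)^2 = x^2*(x+y-(x-y)*S^2)^2/D^2"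
proof -
  have C: "C^2 = 1 - S^2" using assms(1) by simp
  have e1: "D^2 - 4*x^2*S^2 = C^2 * (4*(((x+y)/2)^2*C^2 + x*y*S^2))"
    unfolding C assms(2) by (simp add: power2_eq_square field_simps)
  show "1 - (2*x*S/D)^2 = C^2 * (4*(((x+y)/2)^2*C^2 + x*y*S^2)) / D^2"
    unfolding e1[symmetric] using assms(3) by (simp add: field_simps power2_eq_square)
  have e2: "x^2*(D^2 - 4*x^2*S^2) + y^2*(4*x^2*S^2) = x^2*(x+y-(x-y)*S^2)^2"
    unfolding assms(2) by (simp add: power2_eq_square field_simps)
  show "x^2*(1 - (2*x*S/D)^2) + y^2*(2*x*S/D)^2 = x^2*(x+y-(x-y)*S^2)^2/D^2"
    unfolding e2[symmetric] using assms(3) by (simp add: field_simps power2_eq_square)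
qed

lemma landen_sq:
  fixes x C E D M :: real
  assumes "x > 0" "C > 0" "E > 0" "D > 0" "M > 0"
  shows "1 / sqrt (x^2*E^2/D^2) * inverse (sqrt (C^2 * (4*M) / D^2)) * (2*x*C*E/D^2) = 1 / sqrt M"
proof -
  have "1 / sqrt (x^2*E^2/D^2) = D/(x*E)" using assms by (simp add: real_sqrt_divide real_sqrt_mult)
  moreover have "inverse (sqrt (C^2 * (4*M) / D^2)) = D/(2*C* sqrt M)"
    using assms by (simp add: real_sqrt_divide real_sqrt_mult field_simps)
  ultimately have "1 / sqrt (x^2*E^2/D^2) * inverse (sqrt (C^2 * (4*M) / D^2)) * (2*x*C*E/D^2)
     = D/(x*E) * (D/(2*C* sqrt M)) * (2*x*C*E/D^2)" by simp
  also have "\<dots> = 1 / sqrt M" using assms by (simp add: field_simps power2_eq_square)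
  finally show ?thesis .
qed

lemma landen:
  fixes x y :: real
  assumes x: "x > 0" and y: "y > 0"
  shows "Hf (x^2) (y^2) (pi/2) = Hf (((x+y)/2)^2) (x*y) (pi/2)"
proof -
  define D where "D p = x+y+(x-y)*(sin p)^2" for p
  define u where "u p = 2*x* sin p / D p" for p
  define E where "E p = x+y-(x-y)*(sin p)^2" for p
  define M where "M p = ((x+y)/2)^2*(cos p)^2 + x*y*(sin p)^2" for p
  have Sb1: "0 \<le> (sin p)^2" for p :: real by simp
  have Sb2: "(sin p)^2 \<le> 1" for p :: real by (simp add: abs_square_le_1)
  note Sb = Sb1 Sb2
  have Dpos: "D p > 0" for p
  proof -
    have "D p = x*(1 + (sin p)^2) + y*(1 - (sin p)^2)" unfolding D_def by (simp add: algebra_simps)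
    moreover have "x*(1 + (sin p)^2) > 0" using x by (intro mult_pos_pos) (simp_all add: add_pos_nonneg)
    moreover have "y*(1 - (sin p)^2) \<ge> 0" using y Sb[of p] by simp
    ultimately show ?thesis by simp
  qed
  have Epos: "E p > 0" for p
  proof -
    have "E p = x*(1 - (sin p)^2) + y*(1 + (sin p)^2)" unfolding E_def by (simp add: algebra_simps)
    moreover have "y*(1 + (sin p)^2) > 0" using y by (intro mult_pos_pos) (simp_all add: add_pos_nonneg)
    moreover have "x*(1 - (sin p)^2) \<ge> 0" using x Sb[of p] by simp
    ultimately show ?thesis by simp
  qed
  have Mpos: "M p > 0" for p unfolding M_def
    using Gf_den_pos[of "((x+y)/2)^2" "x*y" p] x y by simp
  have D_2u: "D p - 2*x* sin p = (1 - sin p)*(x*(1 - sin p) + y*(1 + sin p))" for p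
    unfolding D_def by (simp add: power2_eq_square algebra_simps)
  have urange: "0 \<le> u p \<and> u p \<le> 1" if "0 \<le> p" "p \<le> pi/2" for p
  proof -
    have s: "0 \<le> sin p" "sin p \<le> 1" using that by (auto intro: sin_ge_zero)
    have "0 \<le> (1 - sin p)*(x*(1 - sin p) + y*(1 + sin p))" using s x y by simp
    hence "2*x* sin p \<le> D p" using D_2u[of p] by simp
    thus ?thesis unfolding u_def using Dpos[of p] s x by (simp add: field_simps)
  qed
  have uint: "0 < u p \<and> u p < 1" if "0 < p" "p < pi/2" for p
  proof -
    have s0: "0 < sin p" using that by (auto intro: sin_gt_zero)
    have "cos p > 0" using that by (intro cos_gt_zero_pi) auto
    hence "(sin p)^2 < 1" using sin_squared_eq[of p] by simp
    hence "sin p < 1" using s0 by (simp add: abs_square_less_1)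
    note s = s0 this
    have "0 < (1 - sin p)*(x*(1 - sin p) + y*(1 + sin p))" using s x y by (intro mult_pos_pos add_pos_pos) auto
    hence "2*x* sin p < D p" using D_2u[of p] by simp
    thus ?thesis unfolding u_def using Dpos[of p] s x by (simp add: field_simps)
  qed
  have d_u: "(u has_real_derivative 2*x*cos p*E p/(D p)^2) (at p)" for p
  proof -
    have "((\<lambda>p. 2*x* sin p / (x+y+(x-y)*(sin p)^2)) has_real_derivative
      ((2*x*cos p)*(x+y+(x-y)*(sin p)^2) - 2*x* sin p*((x-y)*(2* sin p*cos p)))/((x+y+(x-y)*(sin p)^2)*(x+y+(x-y)*(sin p)^2))) (at p)"
      using Dpos[of p] unfolding D_def by (intro derivative_eq_intros) (auto simp: power2_eq_square)
    moreover have "((2*x*cos p)*(x+y+(x-y)*(sin p)^2) - 2*x* sin p*((x-y)*(2* sin p*cos p)))/((x+y+(x-y)*(sin p)^2)*(x+y+(x-y)*(sin p)^2))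
       = 2*x*cos p*E p/(D p)^2"
      unfolding D_def E_def by (simp add: power2_eq_square algebra_simps)
    ultimately show ?thesis unfolding u_def[abs_def] D_def by simp
  qed
  define L where "L p = arcsin (u p)" for p
  have Lr: "0 \<le> L p \<and> L p \<le> pi/2" if "0 \<le> p" "p \<le> pi/2" for p
    using urange[OF that] unfolding L_def using arcsin_ubound[of "u p"] arcsin_nonneg[of "u p"] by auto
  have Lint: "0 < L p \<and> L p < 2" if "0 < p" "p < pi/2" for p
  proof -
    have "0 < u p" "u p < 1" using uint[OF that] by auto
    hence "arcsin 0 < arcsin (u p)" "arcsin (u p) \<le> pi/2"
      using arcsin_less_arcsin[of 0 "u p"] arcsin_ubound[of "u p"] by auto
    thus ?thesis unfolding L_def using pi2_lt2' by simp
  qed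
  have ucont: "continuous_on {0..pi/2} u"
    unfolding u_def[abs_def] D_def using Dpos unfolding D_def
    by (intro continuous_intros) (metis less_irrefl)
  have Lcont: "continuous_on {0..pi/2} L"
    unfolding L_def[abs_def] using urange by (intro continuous_intros ucont) (auto, smt (verit))
  have Fcont: "continuous_on {0..pi/2} (\<lambda>p. Hf (x^2) (y^2) (L p))"
    using continuous_on_compose2[OF Hf_cont Lcont, of "x^2" "y^2"] Lr pi2_lt2' x y by fastforce
  have Fder: "((\<lambda>p. Hf (x^2) (y^2) (L p)) has_real_derivative Gf (((x+y)/2)^2) (x*y) p) (at p)"
    if p: "0 < p" "p < pi/2" for p
  proof -
    have u1: "- 1 < u p" "u p < 1" using uint[OF p] by auto
    have dL: "(L has_real_derivative inverse (sqrt (1 - (u p)^2)) * (2*x*cos p*E p/(D p)^2)) (at p)"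
      unfolding L_def[abs_def] using DERIV_chain2[OF DERIV_arcsin[OF u1] d_u] .
    have dF: "((\<lambda>p. Hf (x^2) (y^2) (L p)) has_real_derivative
         Gf (x^2) (y^2) (L p) * (inverse (sqrt (1 - (u p)^2)) * (2*x*cos p*E p/(D p)^2))) (at p)"
      using DERIV_chain2[OF Hf_deriv[of "x^2" "y^2" "L p"] dL] Lint[OF p] x y by simp
    have cp: "cos p > 0" using p by (intro cos_gt_zero_pi) auto
    have sL: "sin (L p) = u p" unfolding L_def using u1 by (intro sin_arcsin) auto
    have cL: "(cos (L p))^2 = 1 - (u p)^2" using sL by (simp add: cos_squared_eq)
    have CS: "(cos p)^2 + (sin p)^2 = 1" by simp
    have A1: "1 - (u p)^2 = (cos p)^2 * (4*M p) / (D p)^2"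
      unfolding u_def M_def using landen_alg(1)[OF CS D_def] Dpos[of p] by simp
    have A2: "x^2*(1 - (u p)^2) + y^2*(u p)^2 = x^2*(E p)^2/(D p)^2"
      unfolding u_def E_def using landen_alg(2)[OF CS D_def] Dpos[of p] by simp
    have G: "Gf (x^2) (y^2) (L p) = 1 / sqrt (x^2*(E p)^2/(D p)^2)"
      unfolding Gf_def cL sL A2[symmetric] ..
    have "Gf (x^2) (y^2) (L p) * (inverse (sqrt (1 - (u p)^2)) * (2*x*cos p*E p/(D p)^2)) = 1 / sqrt (M p)"
      unfolding G A1 using landen_sq[OF x cp Epos[of p] Dpos[of p] Mpos[of p]] by (simp add: mult.assoc)
    also have "\<dots> = Gf (((x+y)/2)^2) (x*y) p" unfolding Gf_def M_def ..
    finally show ?thesis using dF by simp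
  qed
  have "(Gf (((x+y)/2)^2) (x*y) has_integral (Hf (x^2) (y^2) (L (pi/2)) - Hf (x^2) (y^2) (L 0))) {0..pi/2}"
  proof (rule fundamental_theorem_of_calculus_interior_strong[of "{}"])
    fix p assume "p \<in> {0<..<pi/2} - {}"
    thus "((\<lambda>p. Hf (x^2) (y^2) (L p)) has_vector_derivative Gf (((x+y)/2)^2) (x*y) p) (at p)"
      using Fder[of p] by (simp add: has_real_derivative_iff_has_vector_derivative)
  qed (use Fcont in auto)
  moreover have "L 0 = 0" unfolding L_def u_def by simp
  moreover have "L (pi/2) = pi/2" unfolding L_def u_def D_def using x by simp
  ultimately have "(Gf (((x+y)/2)^2) (x*y) has_integral Hf (x^2) (y^2) (pi/2)) {0..pi/2}" by simp
  thus ?thesis unfolding Hf_def by (simp add: integral_unique)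
qed




lemma q_bound: assumes "0 < s" "s < 1/3" shows "sqrt (s^3*(3* s+2)) \<le> s*(s+1)"
proof -
  have "s^3*(3* s+2) \<le> (s*(s+1))^2"
  proof -
    have "(s*(s+1))^2 - s^3*(3* s+2) = s^2*(1 - 2* s^2)" by (simp add: power2_eq_square power3_eq_cube algebra_simps)
    moreover have "s^2 < (1/3)^2" using assms by (intro power_strict_mono) auto
    hence "s^2 < 1/2" by (simp add: power2_eq_square)
    moreover have "s^2 * (1 - 2 * s^2) \<ge> 0" using \<open>s^2 < 1/2\<close> by (intro mult_nonneg_nonneg) auto
    ultimately show ?thesis by linarith
  qed
  hence "sqrt (s^3*(3* s+2)) \<le> sqrt ((s*(s+1))^2)" by (rule real_sqrt_le_mono)
  thus ?thesis using assms by simp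
qed

lemma q_mono: assumes "0 < s2" "s2 \<le> s1" "s1 < 1/3"
  shows "sqrt (s2^3*(3* s2+2)) \<le> sqrt (s1^3*(3* s1+2))"
  using assms by (intro real_sqrt_le_mono mult_mono power_mono) auto

lemma x1_mono: assumes "0 < s2" "s2 \<le> s1" "s1 < 1/3"
  shows "3* s1^2 - 3* s2^2 \<le> 2*(sqrt (s1^3*(3* s1+2)) - sqrt (s2^3*(3* s2+2)))"
proof (cases "s1 = s2")
  case True thus ?thesis by simp
next
  case False
  hence lt: "s2 < s1" using assms by simp
  define q1 where "q1 = sqrt (s1^3*(3* s1+2))"
  define q2 where "q2 = sqrt (s2^3*(3* s2+2))"
  have s1: "0 < s1" using assms by simp
  have q1p: "q1 > 0" unfolding q1_def using s1 by simp
  have q2p: "q2 \<ge> 0" unfolding q2_def using assms by simp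
  have q1s: "q1^2 = s1^3*(3* s1+2)" unfolding q1_def using s1 by simp
  have q2s: "q2^2 = s2^3*(3* s2+2)" unfolding q2_def using assms by simp
  have b1: "q1 \<le> s1*(s1+1)" unfolding q1_def using q_bound s1 assms by simp
  have b2: "q2 \<le> s2*(s2+1)" unfolding q2_def using q_bound assms by simp
  have d: "s1^2 - s2^2 > 0" using lt assms by (simp add: power_strict_mono)
  have "3*(s1^2-s2^2)*(q1+q2) \<le> 3*(s1^2-s2^2)*(s1*(s1+1) + s2*(s2+1))"
    using b1 b2 d by (intro mult_left_mono) auto
  also have "\<dots> \<le> 2*(q1^2 - q2^2)"
  proof -
    have "2*(q1^2 - q2^2) - 3*(s1^2-s2^2)*(s1*(s1+1) + s2*(s2+1))
        = (s1-s2)*(3*(s1+s2)*(s1^2+s2^2) + (s1-s2)^2)"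
      unfolding q1s q2s by (simp add: power2_eq_square power3_eq_cube algebra_simps)
    moreover have "(s1-s2)*(3*(s1+s2)*(s1^2+s2^2) + (s1-s2)^2) \<ge> 0" using lt assms by simp
    ultimately show ?thesis by simp
  qed
  also have "\<dots> = 2*(q1 - q2)*(q1 + q2)" by (simp add: power2_eq_square algebra_simps)
  finally have "3*(s1^2-s2^2)*(q1+q2) \<le> 2*(q1 - q2)*(q1 + q2)" .
  hence "3*(s1^2-s2^2) \<le> 2*(q1 - q2)" using q1p q2p by (simp add: mult_le_cancel_right)
  thus ?thesis unfolding q1_def q2_def by simp
qed

lemma Gf_anti: assumes "0 < X" "X \<le> X'" "0 < Y" "Y \<le> Y'" shows "Gf X' Y' p \<le> Gf X Y p"
proof -
  have "X * (cos p)^2 + Y * (sin p)^2 \<le> X' * (cos p)^2 + Y' * (sin p)^2"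
    using assms by (intro add_mono mult_right_mono) auto
  moreover have "0 < X * (cos p)^2 + Y * (sin p)^2" using Gf_den_pos assms by simp
  ultimately show ?thesis unfolding Gf_def by (simp add: frac_le real_sqrt_le_mono)
qed

lemma Hf_anti: assumes "0 < X" "X \<le> X'" "0 < Y" "Y \<le> Y'" shows "Hf X' Y' (pi/2) \<le> Hf X Y (pi/2)"
  unfolding Hf_def using assms
  by (intro integral_le integrable_continuous_real Gf_cont Gf_anti) auto

context Kctx begin

lemma vieta: "a*b = (c-1)^2" "a+b = 2-c"
proof -
  have "(0-a)*(0-b)*(0-c) = - 4*K" using pfact[of 0] by simp
  hence "a*b*c = c*(1-c)^2" using roots(3) by (simp add: algebra_simps)
  hence "c*(a*b) = c*(c-1)^2" by (simp add: power2_commute mult_ac)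
  thus ab2: "a*b = (c-1)^2" using ab by simp
  have "(1-a)*(1-b)*(1-c) = - 4*K" using pfact[of 1] by simp
  hence "(1-a)*(1-b)*(1-c) = - c*(1-c)^2" using roots(3) by simp
  hence "(1-c)*((1-a)*(1-b)) = (1-c)*(- c*(1-c))" by (simp add: power2_eq_square mult_ac)
  moreover have "1 - c \<noteq> 0" using ab by simp
  ultimately have "(1-a)*(1-b) = - c*(1-c)" by (metis minus_mult_right mult_left_cancel)
  thus "a+b = 2-c" using ab2 by (simp add: power2_eq_square algebra_simps)
qed

lemma XY_sum: "X + Y = 1 - 3*(c-1)^2"
proof -
  have "X + Y = c*(a+b) - 2*(a*b)" unfolding X_def Y_def by (simp add: algebra_simps)
  thus ?thesis unfolding vieta by (simp add: power2_eq_square algebra_simps)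
qed

lemma XY_prod: "X * Y = (c-1)^3*(3*(c-1)+2)"
proof -
  have "X * Y = (a*b)*(c^2 - c*(a+b) + a*b)" unfolding X_def Y_def by (simp add: power2_eq_square algebra_simps)
  thus ?thesis unfolding vieta by (simp add: power2_eq_square power3_eq_cube algebra_simps)
qed

definition "X1 = ((sqrt X + sqrt Y)/2)^2"
definition "Y1 = sqrt X * sqrt Y"

lemma tau_X1: "T = 8 * Hf X1 Y1 (pi/2)"
  using tau_Hf landen[of "sqrt X" "sqrt Y"] XY_pos unfolding X1_def Y1_def by simp

lemma Y1_eq: "Y1 = sqrt ((c-1)^3*(3*(c-1)+2))"
  unfolding Y1_def XY_prod[symmetric] by (simp add: real_sqrt_mult)

lemma X1_eq: "X1 = (1 - 3*(c-1)^2 + 2 * sqrt ((c-1)^3*(3*(c-1)+2)))/4"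
proof -
  have "X1 = ((sqrt X)^2 + (sqrt Y)^2 + 2*Y1)/4" unfolding X1_def Y1_def by (simp add: power2_eq_square algebra_simps)
  thus ?thesis unfolding Y1_eq using XY_pos XY_sum by simp
qed

lemma X1Y1_pos: "X1 > 0" "Y1 > 0"
proof -
  have "sqrt X + sqrt Y > 0" using XY_pos by (simp add: add_pos_pos)
  thus "X1 > 0" "Y1 > 0" unfolding X1_def Y1_def using XY_pos by auto
qed

end

lemma tau_mono:
  assumes K: "0 < K2" "K2 < K1" "K1 < 1/27"
  shows "tauK K1 \<le> tauK K2"
proof -
  interpret k1: Kctx K1 by unfold_locales (use K in auto)
  interpret k2: Kctx K2 by unfold_locales (use K in auto)
  have c: "cK K2 < cK K1"
  proof (rule ccontr)
    assume "\<not> ?thesis"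
    hence "cK K1 \<le> cK K2" by simp
    hence "cK K1 * (cK K1 - 1)^2 \<le> cK K2 * (cK K2 - 1)^2"
      using k1.ab k2.ab by (intro mult_mono power_mono) auto
    thus False using k1.roots(3) k2.roots(3) K by (simp add: power2_commute)
  qed
  define s1 where "s1 = cK K1 - 1"
  define s2 where "s2 = cK K2 - 1"
  have s: "0 < s2" "s2 \<le> s1" "s1 < 1/3" unfolding s1_def s2_def using c k1.ab k2.ab by auto
  have "k2.X1 \<le> k1.X1" unfolding k1.X1_eq k2.X1_eq s1_def[symmetric] s2_def[symmetric]
    using x1_mono[OF s] by simp
  moreover have "k2.Y1 \<le> k1.Y1" unfolding k1.Y1_eq k2.Y1_eq s1_def[symmetric] s2_def[symmetric]
    using q_mono[OF s] by simp
  ultimately have "Hf k1.X1 k1.Y1 (pi/2) \<le> Hf k2.X1 k2.Y1 (pi/2)"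
    using k2.X1Y1_pos by (intro Hf_anti) auto
  thus ?thesis using k1.tau_X1 k2.tau_X1 by simp
qed




locale Two =
  fixes K1 K2 :: real
  assumes K: "0 < K2" "K2 < K1" "K1 < 1/27"
begin

sublocale k1: Kctx K1 by unfold_locales (use K in auto)
sublocale k2: Kctx K2 by unfold_locales (use K in auto)

lemma a_lt: "aK K2 < aK K1"
proof -
  have "(aK K2 - aK K1)*(aK K2 - bK K1)*(aK K2 - cK K1) = 4*K2 - 4*K1"
    using k1.pfact[of "aK K2"] k2.roots(1) by simp
  hence "(aK K2 - aK K1)*((bK K1 - aK K2)*(cK K1 - aK K2)) < 0" using K by (simp add: algebra_simps)
  moreover have "(bK K1 - aK K2)*(cK K1 - aK K2) > 0" using k1.ab k2.ab by simp
  moreover have "aK K2 < bK K1" "aK K2 < cK K1" using k1.ab k2.ab by auto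
  ultimately show ?thesis by (simp add: mult_less_0_iff)
qed

lemma b_lt: "bK K1 < bK K2"
proof -
  have "(bK K2 - aK K1)*(bK K2 - bK K1)*(bK K2 - cK K1) = 4*K2 - 4*K1"
    using k1.pfact[of "bK K2"] k2.roots(2) by simp
  hence "(bK K2 - bK K1)*((bK K2 - aK K1)*(cK K1 - bK K2)) > 0" using K by (simp add: algebra_simps)
  moreover have "(bK K2 - aK K1)*(cK K1 - bK K2) > 0" using k1.ab k2.ab by simp
  ultimately show ?thesis by (simp add: zero_less_mult_iff)
qed

lemma g_lt: assumes "aK K1 < x" "x < bK K1" shows "k2.g x < k1.g x"
proof -
  have p1: "- 2 * U K1 x > 0" using k1.mU_pos assms by simp
  have "- 2 * U K1 x < - 2 * U K2 x" unfolding U_def using K assms k1.ab by simp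
  hence "sqrt (- 2 * U K1 x) < sqrt (- 2 * U K2 x)" by simp
  thus ?thesis unfolding k1.g_def k2.g_def using p1 by (simp add: frac_less2)
qed

lemma F_cmp: assumes "aK K1 \<le> v1" "v1 < v2" "v2 \<le> bK K1"
  shows "FK K2 v2 - FK K2 v1 < FK K1 v2 - FK K1 v1"
proof -
  have sub: "{v1..v2} \<subseteq> {aK K1..bK K1}" "{v1..v2} \<subseteq> {aK K2..bK K2}" using assms a_lt b_lt by auto
  have "(\<lambda>v. FK K1 v - FK K2 v) v1 < (\<lambda>v. FK K1 v - FK K2 v) v2"
  proof (rule DERIV_pos_imp_increasing_open[OF assms(2)])
    fix x assume x: "v1 < x" "x < v2"
    have x1: "aK K1 < x" "x < bK K1" using x assms by auto
    have x2: "aK K2 < x" "x < bK K2" using x1 a_lt b_lt by auto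
    have "((\<lambda>v. FK K1 v - FK K2 v) has_real_derivative k1.g x - k2.g x) (at x)"
      using k1.FK_deriv[OF x1] k2.FK_deriv[OF x2] by (intro derivative_intros)
    thus "\<exists>y. ((\<lambda>v. FK K1 v - FK K2 v) has_real_derivative y) (at x) \<and> 0 < y"
      using g_lt[OF x1] by auto
  next
    show "continuous_on {v1..v2} (\<lambda>v. FK K1 v - FK K2 v)"
      using continuous_on_subset[OF k1.FK_cont sub(1)] continuous_on_subset[OF k2.FK_cont sub(2)]
      by (intro continuous_intros)
  qed
  thus ?thesis by simp
qed

definition "DD t0 s = yK K1 (s + t0) - yK K2 s"

lemma DD_cont: "continuous_on S (DD t0)"
proof -
  have c0: "continuous_on S (\<lambda>s. s + t0)" by (intro continuous_intros)
  have "continuous_on S (\<lambda>s. yK K1 (s + t0))"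
    using continuous_on_compose2[OF k1.yK_cont[of UNIV] c0] by simp
  thus ?thesis unfolding DD_def[abs_def] by (intro continuous_intros k2.yK_cont)
qed

lemma zero_unique:
  fixes n :: int
  assumes s: "of_int n * tauK K2 / 2 < s" "s < (of_int n + 1) * tauK K2 / 2"
    and s': "of_int n * tauK K2 / 2 < s'" "s' < (of_int n + 1) * tauK K2 / 2"
    and z: "DD t0 s = 0" "DD t0 s' = 0" and lt: "s < s'"
  shows False
proof -
  define v where "v = yK K2 s"
  define v' where "v' = yK K2 s'"
  have vv: "v = yK K1 (s + t0)" "v' = yK K1 (s' + t0)" using z unfolding DD_def v_def v'_def by auto
  have r1: "aK K1 \<le> v" "v \<le> bK K1" "aK K1 \<le> v'" "v' \<le> bK K1" using vv k1.yK_spec by auto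
  have F1: "FK K1 v = k1.tri (s + t0)" "FK K1 v' = k1.tri (s' + t0)" using vv k1.yK_spec by auto
  have lip: "\<bar>k1.tri (s' + t0) - k1.tri (s + t0)\<bar> \<le> s' - s" using k1.tri_lip[of "s'+t0" "s+t0"] lt by simp
  have F2: "FK K2 v = k2.tri s" "FK K2 v' = k2.tri s'" unfolding v_def v'_def using k2.yK_spec by auto
  consider (ev) m where "n = 2*m" | (od) m where "n = 2*m+1" by (metis evenE oddE)
  thus False
  proof cases
    case ev
    have t: "k2.tri x = x - of_int m * tauK K2" if "of_int n * tauK K2 / 2 < x" "x < (of_int n + 1) * tauK K2 / 2" for x
    proof -
      have "\<bar>x - of_int m * tauK K2\<bar> \<le> tauK K2 / 2" using that ev k2.tau_pos by (auto simp: field_simps)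
      hence "k2.tri x = \<bar>x - of_int m * tauK K2\<bar>" by (rule k2.tri_eq)
      thus ?thesis using that ev by (auto simp: field_simps)
    qed
    have "FK K2 v < FK K2 v'" using F2 t[OF s] t[OF s'] lt by simp
    hence vlt: "v < v'" using k2.FK_mono[of v' v] r1 a_lt b_lt by (meson not_le order.trans less_imp_le)
    have "FK K2 v' - FK K2 v < FK K1 v' - FK K1 v" by (rule F_cmp) (use r1 vlt in auto)
    thus False using F1 F2 t[OF s] t[OF s'] lip by simp
  next
    case od
    have t: "k2.tri x = of_int (m+1) * tauK K2 - x" if "of_int n * tauK K2 / 2 < x" "x < (of_int n + 1) * tauK K2 / 2" for x
    proof -
      have "\<bar>x - of_int (m+1) * tauK K2\<bar> \<le> tauK K2 / 2" using that od k2.tau_pos by (auto simp: field_simps)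
      hence "k2.tri x = \<bar>x - of_int (m+1) * tauK K2\<bar>" by (rule k2.tri_eq)
      thus ?thesis using that od by (auto simp: field_simps)
    qed
    have "FK K2 v' < FK K2 v" using F2 t[OF s] t[OF s'] lt by simp
    hence vlt: "v' < v" using k2.FK_mono[of v v'] r1 a_lt b_lt by (meson not_le order.trans less_imp_le)
    have "FK K2 v - FK K2 v' < FK K1 v - FK K1 v'" by (rule F_cmp) (use r1 vlt in auto)
    thus False using F1 F2 t[OF s] t[OF s'] lip by simp
  qed
qed

end



context Kctx begin
lemma yK_tri: "tri t = v \<Longrightarrow> yK K t = yhalf K v" unfolding yK_eq by simp
lemma yK_a: "yK K (of_int k * T) = a"
  using yK_tri[of "of_int k * T" 0] tri_eq[of "of_int k * T" k] tau_pos yhalf_0 by simp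
lemma yK_b: "yK K (of_int k * T + T/2) = b"
  using yK_tri[of "of_int k * T + T/2" "T/2"] tri_eq[of "of_int k * T + T/2" k] tau_pos yhalf_T2 by simp
end

context Two begin

lemma DD_endpoints:
  fixes n :: int
  shows "(DD t0 (of_int n * tauK K2 / 2) > 0 \<and> DD t0 ((of_int n + 1) * tauK K2 / 2) < 0) \<or>
         (DD t0 (of_int n * tauK K2 / 2) < 0 \<and> DD t0 ((of_int n + 1) * tauK K2 / 2) > 0)"
proof -
  have y1: "aK K1 \<le> yK K1 s" "yK K1 s \<le> bK K1" for s using k1.yK_spec by auto
  have pa: "DD t0 s > 0" if "yK K2 s = aK K2" for s unfolding DD_def using that y1[of "s+t0"] a_lt by simp
  have pb: "DD t0 s < 0" if "yK K2 s = bK K2" for s unfolding DD_def using that y1[of "s+t0"] b_lt by simp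
  consider (ev) m where "n = 2*m" | (od) m where "n = 2*m+1" by (metis evenE oddE)
  thus ?thesis
  proof cases
    case ev
    have e1: "of_int n * tauK K2 / 2 = of_int m * tauK K2" using ev by simp
    have e2: "(of_int n + 1) * tauK K2 / 2 = of_int m * tauK K2 + tauK K2 / 2" using ev by (simp add: field_simps)
    show ?thesis unfolding e1 e2 using pa[OF k2.yK_a[of m]] pb[OF k2.yK_b[of m]] by blast
  next
    case od
    have e1: "of_int n * tauK K2 / 2 = of_int m * tauK K2 + tauK K2 / 2" using od by (simp add: field_simps)
    have e2: "(of_int n + 1) * tauK K2 / 2 = of_int (m+1) * tauK K2" using od by (simp add: field_simps)
    show ?thesis unfolding e1 e2 using pa[OF k2.yK_a[of "m+1"]] pb[OF k2.yK_b[of m]] by blast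
  qed
qed

lemma part_a:
  fixes n :: int
  shows "\<exists>!t. of_int n * tauK K2 / 2 < t \<and> t < (of_int n + 1) * tauK K2 / 2 \<and>
                 yK K1 (t + t0) = yK K2 t"
proof -
  define l where "l = of_int n * tauK K2 / 2"
  define r where "r = (of_int n + 1) * tauK K2 / 2"
  have lr: "l < r" unfolding l_def r_def using k2.tau_pos by (simp add: field_simps)
  have ex: "\<exists>t. l < t \<and> t < r \<and> DD t0 t = 0"
  proof -
    have c: "continuous_on {l..r} (DD t0)" by (rule DD_cont)
    from DD_endpoints[of t0 n, folded l_def r_def]
    consider "DD t0 l > 0" "DD t0 r < 0" | "DD t0 l < 0" "DD t0 r > 0" by auto
    thus ?thesis
    proof cases
      case 1
      then obtain t where "l \<le> t" "t \<le> r" "DD t0 t = 0" using IVT2'[of "DD t0" r 0 l] c lr by auto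
      moreover have "t \<noteq> l" "t \<noteq> r" using 1 calculation by auto
      ultimately have "l < t \<and> t < r \<and> DD t0 t = 0" by auto
      thus ?thesis by blast
    next
      case 2
      then obtain t where "l \<le> t" "t \<le> r" "DD t0 t = 0" using IVT'[of "DD t0" l 0 r] c lr by auto
      moreover have "t \<noteq> l" "t \<noteq> r" using 2 calculation by auto
      ultimately have "l < t \<and> t < r \<and> DD t0 t = 0" by auto
      thus ?thesis by blast
    qed
  qed
  have un: "t = t'" if "l < t" "t < r" "DD t0 t = 0" "l < t'" "t' < r" "DD t0 t' = 0" for t t'
  proof (rule ccontr)
    assume "t \<noteq> t'"
    hence "t < t' \<or> t' < t" by auto
    thus False using zero_unique[of n _ _ t0] that unfolding l_def r_def by metis
  qed
  show ?thesis unfolding l_def[symmetric] r_def[symmetric]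
    using ex un unfolding DD_def by (metis diff_eq_eq add.left_neutral)
qed

end



context Two begin

abbreviation "T1 \<equiv> tauK K1"
abbreviation "T2 \<equiv> tauK K2"

lemma zu1: assumes "T2/2 < z1" "z1 < T2" "T2/2 < z2" "z2 < T2" "DD t0 z1 = 0" "DD t0 z2 = 0" "z1 < z2"
  shows False
  using zero_unique[of 1 z1 z2 t0] assms by simp

lemma DD_half: "DD t0 (T2/2) < 0"
proof -
  have "yK K2 (T2/2) = bK K2" using k2.yK_b[of 0] by simp
  thus ?thesis unfolding DD_def using k1.yK_spec[of "T2/2 + t0"] b_lt by simp
qed

lemma DD_full: "DD t0 T2 > 0"
proof -
  have "yK K2 T2 = aK K2" using k2.yK_a[of 1] by simp
  thus ?thesis unfolding DD_def using k1.yK_spec[of "T2 + t0"] a_lt by simp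
qed

lemma part_b1: assumes "0 \<le> t" "t \<le> T2/6"
  shows "yK K2 (2 * T2 / 3 - t) > yK K1 (2 * T1 / 3 - t)"
proof -
  define t0 where "t0 = 2*(T1 - T2)/3"
  define s where "s = 2 * T2 / 3 - t"
  have T2p: "T2 > 0" using k2.tau_pos .
  have shift: "s + t0 = 2 * T1 / 3 - t" unfolding s_def t0_def by (simp add: field_simps)
  have c: "continuous_on S (DD t0)" for S by (rule DD_cont)
  have m23: "DD t0 (2*T2/3) < 0"
  proof -
    have tr: "k2.tri (2*T2/3) = T2/3" using k2.tri_eq[of "2*T2/3" 1] T2p by simp
    have y2: "yK K2 (2*T2/3) = k2.ma" using k2.yK_tri[OF tr] k2.yhalf_T3 by simp
    have tr1: "k1.tri (2*T1/3) = T1/3" using k1.tri_eq[of "2*T1/3" 1] k1.tau_pos by simp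
    have y1: "yK K1 (2*T1/3) = k1.ma" using k1.yK_tri[OF tr1] k1.yhalf_T3 by simp
    have e: "2*T2/3 + t0 = 2*T1/3" unfolding t0_def by (simp add: field_simps)
    show ?thesis unfolding DD_def e using y1 y2 a_lt unfolding k1.ma_def k2.ma_def by simp
  qed
  have sr: "T2/2 \<le> s" "s \<le> 2*T2/3" unfolding s_def using assms by auto
  have "DD t0 s < 0"
  proof (rule ccontr)
    assume "\<not> DD t0 s < 0"
    hence ge: "DD t0 s \<ge> 0" by simp
    obtain z1 where z1: "T2/2 \<le> z1" "z1 \<le> s" "DD t0 z1 = 0"
      using IVT'[of "DD t0" "T2/2" 0 s] DD_half[of t0, THEN less_imp_le] ge c sr by auto
    obtain z2 where z2: "2*T2/3 \<le> z2" "z2 \<le> T2" "DD t0 z2 = 0"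
      using IVT'[of "DD t0" "2*T2/3" 0 T2] m23 DD_full[of t0, THEN less_imp_le] c T2p by auto
    have "z1 \<noteq> T2/2" proof assume h: "z1 = T2/2" show False using z1(3) DD_half[of t0] unfolding h by simp qed
    moreover have "z2 \<noteq> 2*T2/3" proof assume h: "z2 = 2*T2/3" show False using z2(3) m23 unfolding h by simp qed
    moreover have "z2 \<noteq> T2" proof assume h: "z2 = T2" show False using z2(3) DD_full[of t0] unfolding h by simp qed
    moreover have "s \<noteq> 2*T2/3" proof assume h: "s = 2*T2/3" show False using ge m23 unfolding h by simp qed
    ultimately show False using zu1[of z1 z2 t0] z1 z2 sr T2p by auto
  qed
  hence "yK K1 (s + t0) < yK K2 s" unfolding DD_def by simp
  thus ?thesis unfolding shift unfolding s_def .
qed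

lemma part_b2: assumes "T2 \<le> 3 * T1" "0 \<le> t" "t \<le> T2/6"
  shows "yK K2 (T2 - t) < yK K1 (T1 - t)"
proof -
  define t0 where "t0 = T1 - T2"
  define s where "s = T2 - t"
  have T2p: "T2 > 0" using k2.tau_pos .
  have T12: "T1 \<le> T2" using tau_mono[OF K] .
  have shift: "s + t0 = T1 - t" unfolding s_def t0_def by simp
  have c: "continuous_on S (DD t0)" for S by (rule DD_cont)
  have m56: "DD t0 (5*T2/6) > 0"
  proof -
    have tr: "k2.tri (5*T2/6) = T2/6" using k2.tri_eq[of "5*T2/6" 1] T2p by simp
    have y2: "yK K2 (5*T2/6) = k2.mb" using k2.yK_tri[OF tr] k2.yhalf_T6 by simp
    have tr1: "k1.tri (T1 - T2/6) = T2/6" using k1.tri_eq[of "T1 - T2/6" 1] assms T2p by simp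
    have y1: "yK K1 (T1 - T2/6) = yhalf K1 (T2/6)" using k1.yK_tri[OF tr1] by simp
    have "yhalf K1 (T1/6) \<le> yhalf K1 (T2/6)" using k1.yhalf_mono[of "T1/6" "T2/6"] T12 assms k1.tau_pos by simp
    hence "k1.mb \<le> yK K1 (T1 - T2/6)" using y1 k1.yhalf_T6 by simp
    moreover have "5*T2/6 + t0 = T1 - T2/6" unfolding t0_def by (simp add: field_simps)
    ultimately show ?thesis unfolding DD_def using y2 b_lt unfolding k1.mb_def k2.mb_def by simp
  qed
  have sr: "5*T2/6 \<le> s" "s \<le> T2" unfolding s_def using assms by auto
  have "DD t0 s > 0"
  proof (rule ccontr)
    assume "\<not> DD t0 s > 0"
    hence le: "DD t0 s \<le> 0" by simp
    obtain z1 where z1: "s \<le> z1" "z1 \<le> T2" "DD t0 z1 = 0"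
      using IVT'[of "DD t0" s 0 T2] DD_full[of t0, THEN less_imp_le] le c sr by auto
    obtain z2 where z2: "T2/2 \<le> z2" "z2 \<le> 5*T2/6" "DD t0 z2 = 0"
      using IVT'[of "DD t0" "T2/2" 0 "5*T2/6"] m56 DD_half[of t0, THEN less_imp_le] c T2p by auto
    have "z1 \<noteq> T2" proof assume h: "z1 = T2" show False using z1(3) DD_full[of t0] unfolding h by simp qed
    moreover have "z2 \<noteq> 5*T2/6" proof assume h: "z2 = 5*T2/6" show False using z2(3) m56 unfolding h by simp qed
    moreover have "z2 \<noteq> T2/2" proof assume h: "z2 = T2/2" show False using z2(3) DD_half[of t0] unfolding h by simp qed
    moreover have "s \<noteq> 5*T2/6" proof assume h: "s = 5*T2/6" show False using le m56 unfolding h by simp qed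
    ultimately show False using zu1[of z2 z1 t0] z1 z2 sr T2p by auto
  qed
  hence "yK K1 (s + t0) > yK K2 s" unfolding DD_def by simp
  thus ?thesis unfolding shift unfolding s_def .
qed

end

theorem lemma6p2:
  fixes K1 K2 :: real
  assumes "0 < K2" and "K2 < K1" and "K1 < 1/27"
  shows "(\<forall>t0::real. \<forall>n::int.
            \<exists>!t. of_int n * tauK K2 / 2 < t \<and> t < (of_int n + 1) * tauK K2 / 2 \<and>
                 yK K1 (t + t0) = yK K2 t)
       \<and> (\<forall>t. 0 \<le> t \<and> t \<le> tauK K2 / 6 \<longrightarrow>
              yK K2 (2 * tauK K2 / 3 - t) > yK K1 (2 * tauK K1 / 3 - t))
       \<and> (tauK K2 \<le> 3 * tauK K1 \<longrightarrow>
            (\<forall>t. 0 \<le> t \<and> t \<le> tauK K2 / 6 \<longrightarrow>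
              yK K2 (tauK K2 - t) < yK K1 (tauK K1 - t)))"
proof -
  interpret Two K1 K2 by unfold_locales (use assms in auto)
  show ?thesis using part_a part_b1 part_b2 by blast
qed



end
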